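(* Let $P=\{p_1=(121,204),\ p_2=(175,196),\ p_3=(216,82),\ p_4=(189,51),\ p_5=(44,96),\ p_6=(36,140),\ p_7=(127,135)\}$. Then $P$ is in general position and $\mu(D(P))=\binom{7}{2}-9=12$.
   Context: A set of points in the plane is in general position if no three of its points are collinear. The disjointness graph of segments $D(P)$ is the graph whose vertices are all closed straight-line segments with both endpoints in $P$, two being adjacent if and only if they are disjoint. For a graph $G$ and $U\subseteq V(G)$, two distinct vertices $x,y\in U$ are $U$-mutually visible if $G$ contains a shortest $x$-$y$ path none of whose internal vertices lies in $U$; $U$ is a mutual-visibility set if every two distinct vertices of $U$ are $U$-mutually visible. The mutual-visibility number $\mu(G)$ is the maximum size of a mutual-visibility set of $G$. *)

theory Defs
  imports "HOL-Analysis.Analysis"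
begin

type_synonym pt = "real \<times> real"

definition general_position :: "pt set \<Rightarrow> bool" where
  "general_position P \<longleftrightarrow>
     (\<forall>a\<in>P. \<forall>b\<in>P. \<forall>c\<in>P. a \<noteq> b \<and> a \<noteq> c \<and> b \<noteq> c \<longrightarrow> \<not> collinear {a, b, c})"

definition seg_vertices :: "pt set \<Rightarrow> pt set set" where
  "seg_vertices P = {closed_segment a b | a b. a \<in> P \<and> b \<in> P \<and> a \<noteq> b}"

definition seg_adj :: "pt set \<Rightarrow> pt set \<Rightarrow> bool" where
  "seg_adj S T \<longleftrightarrow> S \<inter> T = {}"

text \<open>A walk is a nonempty list of vertices with consecutive entries adjacent;
  its length is the number of edges, i.e. length xs - 1.\<close>
definition walk :: "'v set \<Rightarrow> ('v \<Rightarrow> 'v \<Rightarrow> bool) \<Rightarrow> 'v list \<Rightarrow> bool" where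
  "walk V E xs \<longleftrightarrow> xs \<noteq> [] \<and> set xs \<subseteq> V \<and>
     (\<forall>i. Suc i < length xs \<longrightarrow> E (xs ! i) (xs ! Suc i))"

definition gdist :: "'v set \<Rightarrow> ('v \<Rightarrow> 'v \<Rightarrow> bool) \<Rightarrow> 'v \<Rightarrow> 'v \<Rightarrow> nat" where
  "gdist V E x y = (LEAST n. \<exists>xs. walk V E xs \<and> hd xs = x \<and> last xs = y \<and> length xs = Suc n)"

definition shortest_path :: "'v set \<Rightarrow> ('v \<Rightarrow> 'v \<Rightarrow> bool) \<Rightarrow> 'v \<Rightarrow> 'v \<Rightarrow> 'v list \<Rightarrow> bool" where
  "shortest_path V E x y xs \<longleftrightarrow> walk V E xs \<and> distinct xs \<and> hd xs = x \<and> last xs = y \<and>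
     length xs = Suc (gdist V E x y)"

definition mutually_visible :: "'v set \<Rightarrow> ('v \<Rightarrow> 'v \<Rightarrow> bool) \<Rightarrow> 'v set \<Rightarrow> 'v \<Rightarrow> 'v \<Rightarrow> bool" where
  "mutually_visible V E U x y \<longleftrightarrow>
     (\<exists>xs. shortest_path V E x y xs \<and> set (butlast (tl xs)) \<inter> U = {})"

definition mv_set :: "'v set \<Rightarrow> ('v \<Rightarrow> 'v \<Rightarrow> bool) \<Rightarrow> 'v set \<Rightarrow> bool" where
  "mv_set V E U \<longleftrightarrow> U \<subseteq> V \<and>
     (\<forall>x\<in>U. \<forall>y\<in>U. x \<noteq> y \<longrightarrow> mutually_visible V E U x y)"

definition mu :: "'v set \<Rightarrow> ('v \<Rightarrow> 'v \<Rightarrow> bool) \<Rightarrow> nat" where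
  "mu V E = Max {card U | U. mv_set V E U}"

end

theory Submission
  imports Defs
begin

section \<open>Hitting-set search\<close>

fun packc :: "nat list \<Rightarrow> nat list list \<Rightarrow> nat" where
  "packc used [] = 0"
| "packc used (m#ms) = (if list_all (\<lambda>x. x \<notin> set used) m then Suc (packc (m @ used) ms) else packc used ms)"

fun shortest :: "nat list list \<Rightarrow> nat list" where
  "shortest [] = []"
| "shortest [m] = m"
| "shortest (m#ms) = (let s = shortest ms in if length s < length m then s else m)"

fun hs :: "nat \<Rightarrow> nat \<Rightarrow> nat list list \<Rightarrow> bool" where
  "hs 0 k ms = True"
| "hs (Suc n) k ms = (if [] \<in> set ms then False else if ms = [] then True else if k < packc [] ms then False
     else (let v = hd (shortest ms) in hs n (k - 1) (filter (\<lambda>m. v \<notin> set m) ms) \<or> hs n k (map (removeAll v) ms)))"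

lemma packc_sound:
  assumes "finite W" "\<forall>m\<in>set ms. set m \<inter> W \<noteq> {}"
  shows "packc used ms \<le> card (W - set used)"
  using assms(2)
proof (induction ms arbitrary: used)
  case Nil then show ?case by simp
next
  case (Cons m ms)
  show ?case
  proof (cases "list_all (\<lambda>x. x \<notin> set used) m")
    case True
    then have T: "set m \<inter> set used = {}" by (auto simp: list_all_iff)
    from Cons.prems obtain w where w: "w \<in> set m" "w \<in> W" by auto
    with T have wu: "w \<in> W - set used" by auto
    have "packc (m @ used) ms \<le> card (W - set (m @ used))" using Cons.IH[of "m @ used"] Cons.prems by simp
    also have "\<dots> \<le> card (W - set used - {w})"
      by (rule card_mono) (use assms(1) w in auto)
    also have "\<dots> = card (W - set used) - 1" using wu assms(1) by simp
    finally have "packc (m @ used) ms \<le> card (W - set used) - 1" .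
    moreover have "card (W - set used) > 0" using wu assms(1) by (auto simp: card_gt_0_iff)
    ultimately show ?thesis using True by simp
  next
    case False
    then show ?thesis using Cons by auto
  qed
qed

lemma hs_sound:
  assumes "finite W" "\<forall>m\<in>set ms. set m \<inter> W \<noteq> {}" "card W \<le> k"
  shows "hs n k ms"
  using assms
proof (induction n arbitrary: k ms W)
  case 0 then show ?case by simp
next
  case (Suc n)
  have ne: "[] \<notin> set ms" using Suc.prems by auto
  show ?case
  proof (cases "ms = []")
    case True then show ?thesis by simp
  next
    case False
    have pk: "\<not> k < packc [] ms" using packc_sound[OF Suc.prems(1,2), of "[]"] Suc.prems(3) by simp
    define v where "v = hd (shortest ms)"
    have "hs n (k - 1) (filter (\<lambda>m. v \<notin> set m) ms) \<or> hs n k (map (removeAll v) ms)"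
    proof (cases "v \<in> W")
      case True
      have "hs n (k - 1) (filter (\<lambda>m. v \<notin> set m) ms)"
      proof (rule Suc.IH[of "W - {v}"])
        show "finite (W - {v})" using Suc.prems by simp
        show "\<forall>m\<in>set (filter (\<lambda>m. v \<notin> set m) ms). set m \<inter> (W - {v}) \<noteq> {}" using Suc.prems(2) by auto
        show "card (W - {v}) \<le> k - 1" using Suc.prems True by simp
      qed
      then show ?thesis by simp
    next
      case False
      have "hs n k (map (removeAll v) ms)"
      proof (rule Suc.IH[of W])
        show "\<forall>m\<in>set (map (removeAll v) ms). set m \<inter> W \<noteq> {}" using Suc.prems(2) False by auto
      qed (use Suc.prems in auto)
      then show ?thesis by simp
    qed
    then show ?thesis unfolding hs.simps(2) Let_def v_def[symmetric] using ne False pk by simp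
  qed
qed


lemma len1: "length xs = Suc 0 \<Longrightarrow> \<exists>a. xs = [a]" by (metis length_0_conv length_Suc_conv)
lemma len2: "length xs = Suc (Suc 0) \<Longrightarrow> \<exists>a b. xs = [a,b]" by (metis length_0_conv length_Suc_conv)
lemma len3: "length xs = Suc (Suc (Suc 0)) \<Longrightarrow> \<exists>a b c. xs = [a,b,c]" by (metis length_0_conv length_Suc_conv)
lemma all_lt2: "(\<forall>i. Suc i < length [x,y] \<longrightarrow> P i) \<longleftrightarrow> P 0"
proof
  assume "\<forall>i. Suc i < length [x,y] \<longrightarrow> P i"
  then show "P 0" by simp
next
  assume a: "P 0"
  show "\<forall>i. Suc i < length [x,y] \<longrightarrow> P i"
  proof (intro allI impI)
    fix i assume "Suc i < length [x,y]"
    then have "i = 0" by simp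
    then show "P i" using a by auto
  qed
qed
lemma walk2: "walk V E [x,y] \<longleftrightarrow> x \<in> V \<and> y \<in> V \<and> E x y"
proof -
  have "walk V E [x,y] \<longleftrightarrow> set [x,y] \<subseteq> V \<and> E ([x,y] ! 0) ([x,y] ! Suc 0)"
    unfolding walk_def all_lt2[of x y "\<lambda>i. E ([x,y] ! i) ([x,y] ! Suc i)"] by simp
  then show ?thesis by simp
qed
lemma gdist_eqI:
  assumes "walk V E xs" "hd xs = x" "last xs = y" "length xs = Suc n"
    and "\<And>ys. walk V E ys \<Longrightarrow> hd ys = x \<Longrightarrow> last ys = y \<Longrightarrow> Suc n \<le> length ys"
  shows "gdist V E x y = n"
  unfolding gdist_def
proof (rule Least_equality)
  show "\<exists>xs. walk V E xs \<and> hd xs = x \<and> last xs = y \<and> length xs = Suc n" using assms by blast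
next
  fix m assume "\<exists>xs. walk V E xs \<and> hd xs = x \<and> last xs = y \<and> length xs = Suc m"
  then obtain ys where "walk V E ys" "hd ys = x" "last ys = y" "length ys = Suc m" by blast
  then have "Suc n \<le> Suc m" using assms(5) by metis
  then show "n \<le> m" by simp
qed
lemma short_walks:
  assumes "walk V E ys" "hd ys = x" "last ys = y" "x \<noteq> y"
  shows "2 \<le> length ys"
proof -
  have "ys \<noteq> []" using assms(1) by (simp add: walk_def)
  moreover have "length ys \<noteq> Suc 0"
  proof
    assume "length ys = Suc 0"
    then obtain a where "ys = [a]" using len1 by blast
    then show False using assms by simp
  qed
  moreover have "length ys \<noteq> 0" using \<open>ys \<noteq> []\<close> by simp
  ultimately show ?thesis by linarith
qed
lemma short_walks2:
  assumes "walk V E ys" "hd ys = x" "last ys = y" "x \<noteq> y" "\<not> E x y"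
  shows "3 \<le> length ys"
proof -
  have "2 \<le> length ys" using short_walks[OF assms(1-4)] .
  moreover have "length ys \<noteq> Suc (Suc 0)"
  proof
    assume "length ys = Suc (Suc 0)"
    then obtain a b where ab: "ys = [a,b]" using len2 by blast
    then have "a = x" "b = y" using assms(2,3) by simp_all
    then have "walk V E [x,y]" using assms(1) ab by simp
    then have "E x y" by (simp add: walk2)
    then show False using assms(5) by simp
  qed
  ultimately show ?thesis by linarith
qed


lemma all_lt3: "(\<forall>i. Suc i < length [x,z,y] \<longrightarrow> P i) \<longleftrightarrow> P 0 \<and> P 1"
proof
  assume "\<forall>i. Suc i < length [x,z,y] \<longrightarrow> P i"
  then show "P 0 \<and> P 1" by simp
next
  assume a: "P 0 \<and> P 1"
  show "\<forall>i. Suc i < length [x,z,y] \<longrightarrow> P i"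
  proof (intro allI impI)
    fix i assume "Suc i < length [x,z,y]"
    then have "i = 0 \<or> i = 1" by (simp only: list.size) arith
    then show "P i" using a by auto
  qed
qed

lemma walk3: "walk V E [x,z,y] \<longleftrightarrow> x \<in> V \<and> z \<in> V \<and> y \<in> V \<and> E x z \<and> E z y"
proof -
  have "walk V E [x,z,y] \<longleftrightarrow> set [x,z,y] \<subseteq> V \<and> (E ([x,z,y] ! 0) ([x,z,y] ! Suc 0) \<and> E ([x,z,y] ! 1) ([x,z,y] ! Suc 1))"
    unfolding walk_def all_lt3[of x z y "\<lambda>i. E ([x,z,y] ! i) ([x,z,y] ! Suc i)"] by simp
  then show ?thesis by simp
qed

lemma mv_adj:
  assumes "x \<in> V" "y \<in> V" "E x y" "x \<noteq> y"
  shows "mutually_visible V E U x y"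
proof -
  have w: "walk V E [x,y]" using assms by (simp add: walk2)
  have g: "gdist V E x y = 1"
  proof (rule gdist_eqI[OF w])
    fix ys assume "walk V E ys" "hd ys = x" "last ys = y"
    then show "Suc 1 \<le> length ys" using short_walks[of V E ys x y] assms(4) by simp
  qed simp_all
  have "shortest_path V E x y [x,y]" unfolding shortest_path_def using w g assms(4) by simp
  then show ?thesis unfolding mutually_visible_def by (intro exI[of _ "[x,y]"]) simp
qed

lemma gdist2:
  assumes "x \<in> V" "y \<in> V" "z \<in> V" "E x z" "E z y" "\<not> E x y" "x \<noteq> y"
  shows "gdist V E x y = 2"
proof -
  have w: "walk V E [x,z,y]" using assms by (simp add: walk3)
  show ?thesis
  proof (rule gdist_eqI[OF w])
    fix ys assume "walk V E ys" "hd ys = x" "last ys = y"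
    then show "Suc 2 \<le> length ys" using short_walks2[of V E ys x y] assms(6,7) by simp
  qed simp_all
qed

lemma mv_two:
  assumes "x \<in> V" "y \<in> V" "z \<in> V" "E x z" "E z y" "\<not> E x y" "x \<noteq> y" "x \<noteq> z" "z \<noteq> y" "z \<notin> U"
  shows "mutually_visible V E U x y"
proof -
  have w: "walk V E [x,z,y]" using assms by (simp add: walk3)
  have g: "gdist V E x y = 2" using gdist2[OF assms(1-7)] .
  have "shortest_path V E x y [x,z,y]" unfolding shortest_path_def using w g assms(7-9) by simp
  moreover have "set (butlast (tl [x,z,y])) \<inter> U = {}" using assms(10) by simp
  ultimately show ?thesis unfolding mutually_visible_def by blast
qed

lemma mv_two_inv:
  assumes "mutually_visible V E U x y" "x \<in> V" "y \<in> V" "z \<in> V" "E x z" "E z y" "\<not> E x y" "x \<noteq> y"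
  shows "\<exists>w\<in>V. E x w \<and> E w y \<and> w \<notin> U"
proof -
  have g: "gdist V E x y = 2" using gdist2[OF assms(2-8)] .
  obtain xs where xs: "shortest_path V E x y xs" "set (butlast (tl xs)) \<inter> U = {}"
    using assms(1) unfolding mutually_visible_def by blast
  then have "length xs = Suc (Suc (Suc 0))" using g by (simp add: shortest_path_def)
  then obtain a w c where abc: "xs = [a,w,c]" using len3 by blast
  have "a = x" "c = y" using xs(1) abc by (simp_all add: shortest_path_def)
  then have "walk V E [x,w,y]" using xs(1) abc by (simp add: shortest_path_def)
  then have "w \<in> V" "E x w" "E w y" by (simp_all add: walk3)
  moreover have "w \<notin> U" using xs(2) abc by simp
  ultimately show ?thesis by blast
qed

section \<open>Geometry\<close>

lemma disj_sep:
  fixes a b c d :: "real \<times> real"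
  assumes "\<alpha> * fst a + \<beta> * snd a < \<gamma>" "\<alpha> * fst b + \<beta> * snd b < \<gamma>"
    "\<alpha> * fst c + \<beta> * snd c > \<gamma>" "\<alpha> * fst d + \<beta> * snd d > \<gamma>"
  shows "closed_segment a b \<inter> closed_segment c d = {}"
proof -
  have e: "inner (\<alpha>,\<beta>) x = \<alpha> * fst x + \<beta> * snd x" for x :: "real \<times> real" by (cases x) simp
  have "closed_segment a b \<subseteq> {x. inner (\<alpha>,\<beta>) x < \<gamma>}"
    by (rule closed_segment_subset) (use assms e convex_halfspace_lt[of "(\<alpha>,\<beta>)" \<gamma>] in auto)
  moreover have "closed_segment c d \<subseteq> {x. inner (\<alpha>,\<beta>) x > \<gamma>}"
    by (rule closed_segment_subset) (use assms e convex_halfspace_gt[of \<gamma> "(\<alpha>,\<beta>)"] in auto)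
  ultimately show ?thesis by (auto simp: subset_iff) (meson order_less_asym)
qed

lemma meet:
  fixes a b c d :: "real \<times> real"
  assumes "0 \<le> u" "u \<le> 1" "0 \<le> v" "v \<le> 1" "(1-u) *\<^sub>R a + u *\<^sub>R b = (1-v) *\<^sub>R c + v *\<^sub>R d"
  shows "closed_segment a b \<inter> closed_segment c d \<noteq> {}"
proof -
  have "(1-u) *\<^sub>R a + u *\<^sub>R b \<in> closed_segment a b" using assms by (auto simp: in_segment)
  moreover have "(1-u) *\<^sub>R a + u *\<^sub>R b \<in> closed_segment c d" unfolding assms(5) using assms by (auto simp: in_segment)
  ultimately show ?thesis by blast
qed

lemma coll_cross:
  fixes a b c :: "real \<times> real"
  assumes "collinear {a,b,c}"
  shows "(fst b - fst a) * (snd c - snd a) = (snd b - snd a) * (fst c - fst a)"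
proof -
  obtain u where u: "\<forall>x\<in>{a,b,c}. \<forall>y\<in>{a,b,c}. \<exists>k. x - y = k *\<^sub>R u"
    using assms unfolding collinear_def by blast
  obtain s where s: "b - a = s *\<^sub>R u" using u by blast
  obtain t where t: "c - a = t *\<^sub>R u" using u by blast
  have "fst b - fst a = s * fst u" "snd b - snd a = s * snd u"
    using arg_cong[OF s, of fst] arg_cong[OF s, of snd] by simp_all
  moreover have "fst c - fst a = t * fst u" "snd c - snd a = t * snd u"
    using arg_cong[OF t, of fst] arg_cong[OF t, of snd] by simp_all
  ultimately show ?thesis by simp
qed

lemma ncoll:
  fixes a b c :: "real \<times> real"
  shows "(fst b - fst a) * (snd c - snd a) \<noteq> (snd b - snd a) * (fst c - fst a) \<Longrightarrow> \<not> collinear {a,b,c}"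
  using coll_cross by blast

lemma segv_intro: "a \<in> P \<Longrightarrow> b \<in> P \<Longrightarrow> a \<noteq> b \<Longrightarrow> closed_segment a b \<in> seg_vertices P"
  unfolding seg_vertices_def by blast

definition sgl :: "pt set list" where
  "sgl = [closed_segment (121,204) (175,196), closed_segment (121,204) (216,82), closed_segment (121,204) (189,51), closed_segment (121,204) (44,96), closed_segment (121,204) (36,140), closed_segment (121,204) (127,135), closed_segment (175,196) (216,82), closed_segment (175,196) (189,51), closed_segment (175,196) (44,96), closed_segment (175,196) (36,140), closed_segment (175,196) (127,135), closed_segment (216,82) (189,51), closed_segment (216,82) (44,96), closed_segment (216,82) (36,140), closed_segment (216,82) (127,135), closed_segment (189,51) (44,96), closed_segment (189,51) (36,140), closed_segment (189,51) (127,135), closed_segment (44,96) (36,140), closed_segment (44,96) (127,135), closed_segment (36,140) (127,135)]"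

definition sg :: "nat \<Rightarrow> pt set" where "sg i = sgl ! i"

lemma sg_0: "sg 0 = closed_segment (121,204) (175,196)" by (simp add: sg_def sgl_def)
lemma sg_1: "sg 1 = closed_segment (121,204) (216,82)" by (simp add: sg_def sgl_def)
lemma sg_2: "sg 2 = closed_segment (121,204) (189,51)" by (simp add: sg_def sgl_def)
lemma sg_3: "sg 3 = closed_segment (121,204) (44,96)" by (simp add: sg_def sgl_def)
lemma sg_4: "sg 4 = closed_segment (121,204) (36,140)" by (simp add: sg_def sgl_def)
lemma sg_5: "sg 5 = closed_segment (121,204) (127,135)" by (simp add: sg_def sgl_def)
lemma sg_6: "sg 6 = closed_segment (175,196) (216,82)" by (simp add: sg_def sgl_def)
lemma sg_7: "sg 7 = closed_segment (175,196) (189,51)" by (simp add: sg_def sgl_def)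
lemma sg_8: "sg 8 = closed_segment (175,196) (44,96)" by (simp add: sg_def sgl_def)
lemma sg_9: "sg 9 = closed_segment (175,196) (36,140)" by (simp add: sg_def sgl_def)
lemma sg_10: "sg 10 = closed_segment (175,196) (127,135)" by (simp add: sg_def sgl_def)
lemma sg_11: "sg 11 = closed_segment (216,82) (189,51)" by (simp add: sg_def sgl_def)
lemma sg_12: "sg 12 = closed_segment (216,82) (44,96)" by (simp add: sg_def sgl_def)
lemma sg_13: "sg 13 = closed_segment (216,82) (36,140)" by (simp add: sg_def sgl_def)
lemma sg_14: "sg 14 = closed_segment (216,82) (127,135)" by (simp add: sg_def sgl_def)
lemma sg_15: "sg 15 = closed_segment (189,51) (44,96)" by (simp add: sg_def sgl_def)
lemma sg_16: "sg 16 = closed_segment (189,51) (36,140)" by (simp add: sg_def sgl_def)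
lemma sg_17: "sg 17 = closed_segment (189,51) (127,135)" by (simp add: sg_def sgl_def)
lemma sg_18: "sg 18 = closed_segment (44,96) (36,140)" by (simp add: sg_def sgl_def)
lemma sg_19: "sg 19 = closed_segment (44,96) (127,135)" by (simp add: sg_def sgl_def)
lemma sg_20: "sg 20 = closed_segment (36,140) (127,135)" by (simp add: sg_def sgl_def)

definition adjl :: "nat list list" where "adjl = [[11, 12, 13, 14, 15, 16, 17, 18, 19, 20], [15, 16, 17, 18, 19, 20], [6, 18, 19, 20], [6, 7, 10, 11, 14, 17], [6, 7, 8, 10, 11, 12, 14, 15, 17, 19], [6, 7, 11, 12, 13, 15, 16, 18], [2, 3, 4, 5, 15, 16, 17, 18, 19, 20], [3, 4, 5, 18, 19, 20], [4, 11, 14, 17], [11, 12, 14, 15, 17, 19], [3, 4, 11, 12, 13, 15, 16, 18], [0, 3, 4, 5, 8, 9, 10, 18, 19, 20], [0, 4, 5, 9, 10, 20], [0, 5, 10, 15], [0, 3, 4, 8, 9, 15, 16, 18], [0, 1, 4, 5, 6, 9, 10, 13, 14, 20], [0, 1, 5, 6, 10, 14], [0, 1, 3, 4, 6, 8, 9, 18], [0, 1, 2, 5, 6, 7, 10, 11, 14, 17], [0, 1, 2, 4, 6, 7, 9, 11], [0, 1, 2, 6, 7, 11, 12, 15]]"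

definition A :: "nat \<Rightarrow> nat \<Rightarrow> bool" where "A i j = (j \<in> set (adjl ! i))"

lemma A_tab:
  "\<not> A 0 0"
  "\<not> A 0 1"
  "\<not> A 0 2"
  "\<not> A 0 3"
  "\<not> A 0 4"
  "\<not> A 0 5"
  "\<not> A 0 6"
  "\<not> A 0 7"
  "\<not> A 0 8"
  "\<not> A 0 9"
  "\<not> A 0 10"
  "A 0 11"
  "A 0 12"
  "A 0 13"
  "A 0 14"
  "A 0 15"
  "A 0 16"
  "A 0 17"
  "A 0 18"
  "A 0 19"
  "A 0 20"
  "\<not> A 1 0"
  "\<not> A 1 1"
  "\<not> A 1 2"
  "\<not> A 1 3"
  "\<not> A 1 4"
  "\<not> A 1 5"
  "\<not> A 1 6"
  "\<not> A 1 7"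
  "\<not> A 1 8"
  "\<not> A 1 9"
  "\<not> A 1 10"
  "\<not> A 1 11"
  "\<not> A 1 12"
  "\<not> A 1 13"
  "\<not> A 1 14"
  "A 1 15"
  "A 1 16"
  "A 1 17"
  "A 1 18"
  "A 1 19"
  "A 1 20"
  "\<not> A 2 0"
  "\<not> A 2 1"
  "\<not> A 2 2"
  "\<not> A 2 3"
  "\<not> A 2 4"
  "\<not> A 2 5"
  "A 2 6"
  "\<not> A 2 7"
  "\<not> A 2 8"
  "\<not> A 2 9"
  "\<not> A 2 10"
  "\<not> A 2 11"
  "\<not> A 2 12"
  "\<not> A 2 13"
  "\<not> A 2 14"
  "\<not> A 2 15"
  "\<not> A 2 16"
  "\<not> A 2 17"
  "A 2 18"
  "A 2 19"
  "A 2 20"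
  "\<not> A 3 0"
  "\<not> A 3 1"
  "\<not> A 3 2"
  "\<not> A 3 3"
  "\<not> A 3 4"
  "\<not> A 3 5"
  "A 3 6"
  "A 3 7"
  "\<not> A 3 8"
  "\<not> A 3 9"
  "A 3 10"
  "A 3 11"
  "\<not> A 3 12"
  "\<not> A 3 13"
  "A 3 14"
  "\<not> A 3 15"
  "\<not> A 3 16"
  "A 3 17"
  "\<not> A 3 18"
  "\<not> A 3 19"
  "\<not> A 3 20"
  "\<not> A 4 0"
  "\<not> A 4 1"
  "\<not> A 4 2"
  "\<not> A 4 3"
  "\<not> A 4 4"
  "\<not> A 4 5"
  "A 4 6"
  "A 4 7"
  "A 4 8"
  "\<not> A 4 9"
  "A 4 10"
  "A 4 11"
  "A 4 12"
  "\<not> A 4 13"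
  "A 4 14"
  "A 4 15"
  "\<not> A 4 16"
  "A 4 17"
  "\<not> A 4 18"
  "A 4 19"
  "\<not> A 4 20"
  "\<not> A 5 0"
  "\<not> A 5 1"
  "\<not> A 5 2"
  "\<not> A 5 3"
  "\<not> A 5 4"
  "\<not> A 5 5"
  "A 5 6"
  "A 5 7"
  "\<not> A 5 8"
  "\<not> A 5 9"
  "\<not> A 5 10"
  "A 5 11"
  "A 5 12"
  "A 5 13"
  "\<not> A 5 14"
  "A 5 15"
  "A 5 16"
  "\<not> A 5 17"
  "A 5 18"
  "\<not> A 5 19"
  "\<not> A 5 20"
  "\<not> A 6 0"
  "\<not> A 6 1"
  "A 6 2"
  "A 6 3"
  "A 6 4"
  "A 6 5"
  "\<not> A 6 6"
  "\<not> A 6 7"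
  "\<not> A 6 8"
  "\<not> A 6 9"
  "\<not> A 6 10"
  "\<not> A 6 11"
  "\<not> A 6 12"
  "\<not> A 6 13"
  "\<not> A 6 14"
  "A 6 15"
  "A 6 16"
  "A 6 17"
  "A 6 18"
  "A 6 19"
  "A 6 20"
  "\<not> A 7 0"
  "\<not> A 7 1"
  "\<not> A 7 2"
  "A 7 3"
  "A 7 4"
  "A 7 5"
  "\<not> A 7 6"
  "\<not> A 7 7"
  "\<not> A 7 8"
  "\<not> A 7 9"
  "\<not> A 7 10"
  "\<not> A 7 11"
  "\<not> A 7 12"
  "\<not> A 7 13"
  "\<not> A 7 14"
  "\<not> A 7 15"
  "\<not> A 7 16"
  "\<not> A 7 17"
  "A 7 18"
  "A 7 19"
  "A 7 20"
  "\<not> A 8 0"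
  "\<not> A 8 1"
  "\<not> A 8 2"
  "\<not> A 8 3"
  "A 8 4"
  "\<not> A 8 5"
  "\<not> A 8 6"
  "\<not> A 8 7"
  "\<not> A 8 8"
  "\<not> A 8 9"
  "\<not> A 8 10"
  "A 8 11"
  "\<not> A 8 12"
  "\<not> A 8 13"
  "A 8 14"
  "\<not> A 8 15"
  "\<not> A 8 16"
  "A 8 17"
  "\<not> A 8 18"
  "\<not> A 8 19"
  "\<not> A 8 20"
  "\<not> A 9 0"
  "\<not> A 9 1"
  "\<not> A 9 2"
  "\<not> A 9 3"
  "\<not> A 9 4"
  "\<not> A 9 5"
  "\<not> A 9 6"
  "\<not> A 9 7"
  "\<not> A 9 8"
  "\<not> A 9 9"
  "\<not> A 9 10"
  "A 9 11"
  "A 9 12"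
  "\<not> A 9 13"
  "A 9 14"
  "A 9 15"
  "\<not> A 9 16"
  "A 9 17"
  "\<not> A 9 18"
  "A 9 19"
  "\<not> A 9 20"
  "\<not> A 10 0"
  "\<not> A 10 1"
  "\<not> A 10 2"
  "A 10 3"
  "A 10 4"
  "\<not> A 10 5"
  "\<not> A 10 6"
  "\<not> A 10 7"
  "\<not> A 10 8"
  "\<not> A 10 9"
  "\<not> A 10 10"
  "A 10 11"
  "A 10 12"
  "A 10 13"
  "\<not> A 10 14"
  "A 10 15"
  "A 10 16"
  "\<not> A 10 17"
  "A 10 18"
  "\<not> A 10 19"
  "\<not> A 10 20"
  "A 11 0"
  "\<not> A 11 1"
  "\<not> A 11 2"
  "A 11 3"
  "A 11 4"
  "A 11 5"
  "\<not> A 11 6"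
  "\<not> A 11 7"
  "A 11 8"
  "A 11 9"
  "A 11 10"
  "\<not> A 11 11"
  "\<not> A 11 12"
  "\<not> A 11 13"
  "\<not> A 11 14"
  "\<not> A 11 15"
  "\<not> A 11 16"
  "\<not> A 11 17"
  "A 11 18"
  "A 11 19"
  "A 11 20"
  "A 12 0"
  "\<not> A 12 1"
  "\<not> A 12 2"
  "\<not> A 12 3"
  "A 12 4"
  "A 12 5"
  "\<not> A 12 6"
  "\<not> A 12 7"
  "\<not> A 12 8"
  "A 12 9"
  "A 12 10"
  "\<not> A 12 11"
  "\<not> A 12 12"
  "\<not> A 12 13"
  "\<not> A 12 14"
  "\<not> A 12 15"
  "\<not> A 12 16"
  "\<not> A 12 17"
  "\<not> A 12 18"
  "\<not> A 12 19"
  "A 12 20"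
  "A 13 0"
  "\<not> A 13 1"
  "\<not> A 13 2"
  "\<not> A 13 3"
  "\<not> A 13 4"
  "A 13 5"
  "\<not> A 13 6"
  "\<not> A 13 7"
  "\<not> A 13 8"
  "\<not> A 13 9"
  "A 13 10"
  "\<not> A 13 11"
  "\<not> A 13 12"
  "\<not> A 13 13"
  "\<not> A 13 14"
  "A 13 15"
  "\<not> A 13 16"
  "\<not> A 13 17"
  "\<not> A 13 18"
  "\<not> A 13 19"
  "\<not> A 13 20"
  "A 14 0"
  "\<not> A 14 1"
  "\<not> A 14 2"
  "A 14 3"
  "A 14 4"
  "\<not> A 14 5"
  "\<not> A 14 6"
  "\<not> A 14 7"
  "A 14 8"
  "A 14 9"
  "\<not> A 14 10"
  "\<not> A 14 11"
  "\<not> A 14 12"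
  "\<not> A 14 13"
  "\<not> A 14 14"
  "A 14 15"
  "A 14 16"
  "\<not> A 14 17"
  "A 14 18"
  "\<not> A 14 19"
  "\<not> A 14 20"
  "A 15 0"
  "A 15 1"
  "\<not> A 15 2"
  "\<not> A 15 3"
  "A 15 4"
  "A 15 5"
  "A 15 6"
  "\<not> A 15 7"
  "\<not> A 15 8"
  "A 15 9"
  "A 15 10"
  "\<not> A 15 11"
  "\<not> A 15 12"
  "A 15 13"
  "A 15 14"
  "\<not> A 15 15"
  "\<not> A 15 16"
  "\<not> A 15 17"
  "\<not> A 15 18"
  "\<not> A 15 19"
  "A 15 20"
  "A 16 0"
  "A 16 1"
  "\<not> A 16 2"
  "\<not> A 16 3"
  "\<not> A 16 4"
  "A 16 5"
  "A 16 6"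
  "\<not> A 16 7"
  "\<not> A 16 8"
  "\<not> A 16 9"
  "A 16 10"
  "\<not> A 16 11"
  "\<not> A 16 12"
  "\<not> A 16 13"
  "A 16 14"
  "\<not> A 16 15"
  "\<not> A 16 16"
  "\<not> A 16 17"
  "\<not> A 16 18"
  "\<not> A 16 19"
  "\<not> A 16 20"
  "A 17 0"
  "A 17 1"
  "\<not> A 17 2"
  "A 17 3"
  "A 17 4"
  "\<not> A 17 5"
  "A 17 6"
  "\<not> A 17 7"
  "A 17 8"
  "A 17 9"
  "\<not> A 17 10"
  "\<not> A 17 11"
  "\<not> A 17 12"
  "\<not> A 17 13"
  "\<not> A 17 14"
  "\<not> A 17 15"
  "\<not> A 17 16"
  "\<not> A 17 17"
  "A 17 18"
  "\<not> A 17 19"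
  "\<not> A 17 20"
  "A 18 0"
  "A 18 1"
  "A 18 2"
  "\<not> A 18 3"
  "\<not> A 18 4"
  "A 18 5"
  "A 18 6"
  "A 18 7"
  "\<not> A 18 8"
  "\<not> A 18 9"
  "A 18 10"
  "A 18 11"
  "\<not> A 18 12"
  "\<not> A 18 13"
  "A 18 14"
  "\<not> A 18 15"
  "\<not> A 18 16"
  "A 18 17"
  "\<not> A 18 18"
  "\<not> A 18 19"
  "\<not> A 18 20"
  "A 19 0"
  "A 19 1"
  "A 19 2"
  "\<not> A 19 3"
  "A 19 4"
  "\<not> A 19 5"
  "A 19 6"
  "A 19 7"
  "\<not> A 19 8"
  "A 19 9"
  "\<not> A 19 10"
  "A 19 11"
  "\<not> A 19 12"
  "\<not> A 19 13"
  "\<not> A 19 14"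
  "\<not> A 19 15"
  "\<not> A 19 16"
  "\<not> A 19 17"
  "\<not> A 19 18"
  "\<not> A 19 19"
  "\<not> A 19 20"
  "A 20 0"
  "A 20 1"
  "A 20 2"
  "\<not> A 20 3"
  "\<not> A 20 4"
  "\<not> A 20 5"
  "A 20 6"
  "A 20 7"
  "\<not> A 20 8"
  "\<not> A 20 9"
  "\<not> A 20 10"
  "A 20 11"
  "A 20 12"
  "\<not> A 20 13"
  "\<not> A 20 14"
  "A 20 15"
  "\<not> A 20 16"
  "\<not> A 20 17"
  "\<not> A 20 18"
  "\<not> A 20 19"
  "\<not> A 20 20"
  by (simp_all add: A_def adjl_def)

lemma A_tab1:
  "\<not> A 0 (Suc 0)"
  "\<not> A (Suc 0) 0"
  "\<not> A (Suc 0) (Suc 0)"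
  "\<not> A (Suc 0) 2"
  "\<not> A (Suc 0) 3"
  "\<not> A (Suc 0) 4"
  "\<not> A (Suc 0) 5"
  "\<not> A (Suc 0) 6"
  "\<not> A (Suc 0) 7"
  "\<not> A (Suc 0) 8"
  "\<not> A (Suc 0) 9"
  "\<not> A (Suc 0) 10"
  "\<not> A (Suc 0) 11"
  "\<not> A (Suc 0) 12"
  "\<not> A (Suc 0) 13"
  "\<not> A (Suc 0) 14"
  "A (Suc 0) 15"
  "A (Suc 0) 16"
  "A (Suc 0) 17"
  "A (Suc 0) 18"
  "A (Suc 0) 19"
  "A (Suc 0) 20"
  "\<not> A 2 (Suc 0)"
  "\<not> A 3 (Suc 0)"
  "\<not> A 4 (Suc 0)"
  "\<not> A 5 (Suc 0)"
  "\<not> A 6 (Suc 0)"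
  "\<not> A 7 (Suc 0)"
  "\<not> A 8 (Suc 0)"
  "\<not> A 9 (Suc 0)"
  "\<not> A 10 (Suc 0)"
  "\<not> A 11 (Suc 0)"
  "\<not> A 12 (Suc 0)"
  "\<not> A 13 (Suc 0)"
  "\<not> A 14 (Suc 0)"
  "A 15 (Suc 0)"
  "A 16 (Suc 0)"
  "A 17 (Suc 0)"
  "A 18 (Suc 0)"
  "A 19 (Suc 0)"
  "A 20 (Suc 0)"
  by (simp_all add: A_def adjl_def)

lemma sgi_0_0: "sg 0 \<inter> sg 0 \<noteq> {}"
  unfolding sg_0 sg_0 by (rule meet[where u="0" and v="0"]) (simp_all add: algebra_simps)
lemma sgi_0_1: "sg 0 \<inter> sg 1 \<noteq> {}"
  unfolding sg_0 sg_1 by (rule meet[where u="0" and v="0"]) (simp_all add: algebra_simps)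
lemma sgi_1_0: "sg 1 \<inter> sg 0 \<noteq> {}"
  by (subst Int_commute) (rule sgi_0_1)
lemma sgi_0_2: "sg 0 \<inter> sg 2 \<noteq> {}"
  unfolding sg_0 sg_2 by (rule meet[where u="0" and v="0"]) (simp_all add: algebra_simps)
lemma sgi_2_0: "sg 2 \<inter> sg 0 \<noteq> {}"
  by (subst Int_commute) (rule sgi_0_2)
lemma sgi_0_3: "sg 0 \<inter> sg 3 \<noteq> {}"
  unfolding sg_0 sg_3 by (rule meet[where u="0" and v="0"]) (simp_all add: algebra_simps)
lemma sgi_3_0: "sg 3 \<inter> sg 0 \<noteq> {}"
  by (subst Int_commute) (rule sgi_0_3)
lemma sgi_0_4: "sg 0 \<inter> sg 4 \<noteq> {}"
  unfolding sg_0 sg_4 by (rule meet[where u="0" and v="0"]) (simp_all add: algebra_simps)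
lemma sgi_4_0: "sg 4 \<inter> sg 0 \<noteq> {}"
  by (subst Int_commute) (rule sgi_0_4)
lemma sgi_0_5: "sg 0 \<inter> sg 5 \<noteq> {}"
  unfolding sg_0 sg_5 by (rule meet[where u="0" and v="0"]) (simp_all add: algebra_simps)
lemma sgi_5_0: "sg 5 \<inter> sg 0 \<noteq> {}"
  by (subst Int_commute) (rule sgi_0_5)
lemma sgi_0_6: "sg 0 \<inter> sg 6 \<noteq> {}"
  unfolding sg_0 sg_6 by (rule meet[where u="1" and v="0"]) (simp_all add: algebra_simps)
lemma sgi_6_0: "sg 6 \<inter> sg 0 \<noteq> {}"
  by (subst Int_commute) (rule sgi_0_6)
lemma sgi_0_7: "sg 0 \<inter> sg 7 \<noteq> {}"
  unfolding sg_0 sg_7 by (rule meet[where u="1" and v="0"]) (simp_all add: algebra_simps)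
lemma sgi_7_0: "sg 7 \<inter> sg 0 \<noteq> {}"
  by (subst Int_commute) (rule sgi_0_7)
lemma sgi_0_8: "sg 0 \<inter> sg 8 \<noteq> {}"
  unfolding sg_0 sg_8 by (rule meet[where u="1" and v="0"]) (simp_all add: algebra_simps)
lemma sgi_8_0: "sg 8 \<inter> sg 0 \<noteq> {}"
  by (subst Int_commute) (rule sgi_0_8)
lemma sgi_0_9: "sg 0 \<inter> sg 9 \<noteq> {}"
  unfolding sg_0 sg_9 by (rule meet[where u="1" and v="0"]) (simp_all add: algebra_simps)
lemma sgi_9_0: "sg 9 \<inter> sg 0 \<noteq> {}"
  by (subst Int_commute) (rule sgi_0_9)
lemma sgi_0_10: "sg 0 \<inter> sg 10 \<noteq> {}"
  unfolding sg_0 sg_10 by (rule meet[where u="1" and v="0"]) (simp_all add: algebra_simps)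
lemma sgi_10_0: "sg 10 \<inter> sg 0 \<noteq> {}"
  by (subst Int_commute) (rule sgi_0_10)
lemma sgi_0_11: "sg 0 \<inter> sg 11 = {}"
  unfolding sg_0 sg_11 by (rule disj_sep[where \<alpha>="(-12)" and \<beta>="(-12)" and \<gamma>="(-3738)"]) simp_all
lemma sgi_11_0: "sg 11 \<inter> sg 0 = {}"
  by (subst Int_commute) (rule sgi_0_11)
lemma sgi_0_12: "sg 0 \<inter> sg 12 = {}"
  unfolding sg_0 sg_12 by (rule disj_sep[where \<alpha>="(-12)" and \<beta>="(-12)" and \<gamma>="(-3738)"]) simp_all
lemma sgi_12_0: "sg 12 \<inter> sg 0 = {}"
  by (subst Int_commute) (rule sgi_0_12)
lemma sgi_0_13: "sg 0 \<inter> sg 13 = {}"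
  unfolding sg_0 sg_13 by (rule disj_sep[where \<alpha>="(-12)" and \<beta>="(-12)" and \<gamma>="(-3738)"]) simp_all
lemma sgi_13_0: "sg 13 \<inter> sg 0 = {}"
  by (subst Int_commute) (rule sgi_0_13)
lemma sgi_0_14: "sg 0 \<inter> sg 14 = {}"
  unfolding sg_0 sg_14 by (rule disj_sep[where \<alpha>="(-12)" and \<beta>="(-12)" and \<gamma>="(-3738)"]) simp_all
lemma sgi_14_0: "sg 14 \<inter> sg 0 = {}"
  by (subst Int_commute) (rule sgi_0_14)
lemma sgi_0_15: "sg 0 \<inter> sg 15 = {}"
  unfolding sg_0 sg_15 by (rule disj_sep[where \<alpha>="(-12)" and \<beta>="(-12)" and \<gamma>="(-3390)"]) simp_all
lemma sgi_15_0: "sg 15 \<inter> sg 0 = {}"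
  by (subst Int_commute) (rule sgi_0_15)
lemma sgi_0_16: "sg 0 \<inter> sg 16 = {}"
  unfolding sg_0 sg_16 by (rule disj_sep[where \<alpha>="(-12)" and \<beta>="(-12)" and \<gamma>="(-3390)"]) simp_all
lemma sgi_16_0: "sg 16 \<inter> sg 0 = {}"
  by (subst Int_commute) (rule sgi_0_16)
lemma sgi_0_17: "sg 0 \<inter> sg 17 = {}"
  unfolding sg_0 sg_17 by (rule disj_sep[where \<alpha>="(-12)" and \<beta>="(-12)" and \<gamma>="(-3522)"]) simp_all
lemma sgi_17_0: "sg 17 \<inter> sg 0 = {}"
  by (subst Int_commute) (rule sgi_0_17)
lemma sgi_0_18: "sg 0 \<inter> sg 18 = {}"
  unfolding sg_0 sg_18 by (rule disj_sep[where \<alpha>="(-12)" and \<beta>="(-12)" and \<gamma>="(-3006)"]) simp_all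
lemma sgi_18_0: "sg 18 \<inter> sg 0 = {}"
  by (subst Int_commute) (rule sgi_0_18)
lemma sgi_0_19: "sg 0 \<inter> sg 19 = {}"
  unfolding sg_0 sg_19 by (rule disj_sep[where \<alpha>="(-12)" and \<beta>="(-12)" and \<gamma>="(-3522)"]) simp_all
lemma sgi_19_0: "sg 19 \<inter> sg 0 = {}"
  by (subst Int_commute) (rule sgi_0_19)
lemma sgi_0_20: "sg 0 \<inter> sg 20 = {}"
  unfolding sg_0 sg_20 by (rule disj_sep[where \<alpha>="(-12)" and \<beta>="(-12)" and \<gamma>="(-3522)"]) simp_all
lemma sgi_20_0: "sg 20 \<inter> sg 0 = {}"
  by (subst Int_commute) (rule sgi_0_20)
lemma sgi_1_1: "sg 1 \<inter> sg 1 \<noteq> {}"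
  unfolding sg_1 sg_1 by (rule meet[where u="0" and v="0"]) (simp_all add: algebra_simps)
lemma sgi_1_2: "sg 1 \<inter> sg 2 \<noteq> {}"
  unfolding sg_1 sg_2 by (rule meet[where u="0" and v="0"]) (simp_all add: algebra_simps)
lemma sgi_2_1: "sg 2 \<inter> sg 1 \<noteq> {}"
  by (subst Int_commute) (rule sgi_1_2)
lemma sgi_1_3: "sg 1 \<inter> sg 3 \<noteq> {}"
  unfolding sg_1 sg_3 by (rule meet[where u="0" and v="0"]) (simp_all add: algebra_simps)
lemma sgi_3_1: "sg 3 \<inter> sg 1 \<noteq> {}"
  by (subst Int_commute) (rule sgi_1_3)
lemma sgi_1_4: "sg 1 \<inter> sg 4 \<noteq> {}"
  unfolding sg_1 sg_4 by (rule meet[where u="0" and v="0"]) (simp_all add: algebra_simps)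
lemma sgi_4_1: "sg 4 \<inter> sg 1 \<noteq> {}"
  by (subst Int_commute) (rule sgi_1_4)
lemma sgi_1_5: "sg 1 \<inter> sg 5 \<noteq> {}"
  unfolding sg_1 sg_5 by (rule meet[where u="0" and v="0"]) (simp_all add: algebra_simps)
lemma sgi_5_1: "sg 5 \<inter> sg 1 \<noteq> {}"
  by (subst Int_commute) (rule sgi_1_5)
lemma sgi_1_6: "sg 1 \<inter> sg 6 \<noteq> {}"
  unfolding sg_1 sg_6 by (rule meet[where u="1" and v="1"]) (simp_all add: algebra_simps)
lemma sgi_6_1: "sg 6 \<inter> sg 1 \<noteq> {}"
  by (subst Int_commute) (rule sgi_1_6)
lemma sgi_1_7: "sg 1 \<inter> sg 7 \<noteq> {}"
  unfolding sg_1 sg_7 by (rule meet[where u="7718/12067" and v="5828/12067"]) (simp_all add: algebra_simps)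
lemma sgi_7_1: "sg 7 \<inter> sg 1 \<noteq> {}"
  by (subst Int_commute) (rule sgi_1_7)
lemma sgi_1_8: "sg 1 \<inter> sg 8 \<noteq> {}"
  unfolding sg_1 sg_8 by (rule meet[where u="104/411" and v="94/411"]) (simp_all add: algebra_simps)
lemma sgi_8_1: "sg 8 \<inter> sg 1 \<noteq> {}"
  by (subst Int_commute) (rule sgi_1_8)
lemma sgi_1_9: "sg 1 \<inter> sg 9 \<noteq> {}"
  unfolding sg_1 sg_9 by (rule meet[where u="44/237" and v="62/237"]) (simp_all add: algebra_simps)
lemma sgi_9_1: "sg 9 \<inter> sg 1 \<noteq> {}"
  by (subst Int_commute) (rule sgi_1_9)
lemma sgi_1_10: "sg 1 \<inter> sg 10 \<noteq> {}"
  unfolding sg_1 sg_10 by (rule meet[where u="3678/11651" and v="5828/11651"]) (simp_all add: algebra_simps)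
lemma sgi_10_1: "sg 10 \<inter> sg 1 \<noteq> {}"
  by (subst Int_commute) (rule sgi_1_10)
lemma sgi_1_11: "sg 1 \<inter> sg 11 \<noteq> {}"
  unfolding sg_1 sg_11 by (rule meet[where u="1" and v="0"]) (simp_all add: algebra_simps)
lemma sgi_11_1: "sg 11 \<inter> sg 1 \<noteq> {}"
  by (subst Int_commute) (rule sgi_1_11)
lemma sgi_1_12: "sg 1 \<inter> sg 12 \<noteq> {}"
  unfolding sg_1 sg_12 by (rule meet[where u="1" and v="0"]) (simp_all add: algebra_simps)
lemma sgi_12_1: "sg 12 \<inter> sg 1 \<noteq> {}"
  by (subst Int_commute) (rule sgi_1_12)
lemma sgi_1_13: "sg 1 \<inter> sg 13 \<noteq> {}"
  unfolding sg_1 sg_13 by (rule meet[where u="1" and v="0"]) (simp_all add: algebra_simps)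
lemma sgi_13_1: "sg 13 \<inter> sg 1 \<noteq> {}"
  by (subst Int_commute) (rule sgi_1_13)
lemma sgi_1_14: "sg 1 \<inter> sg 14 \<noteq> {}"
  unfolding sg_1 sg_14 by (rule meet[where u="1" and v="0"]) (simp_all add: algebra_simps)
lemma sgi_14_1: "sg 14 \<inter> sg 1 \<noteq> {}"
  by (subst Int_commute) (rule sgi_1_14)
lemma sgi_1_15: "sg 1 \<inter> sg 15 = {}"
  unfolding sg_1 sg_15 by (rule disj_sep[where \<alpha>="(-12)" and \<beta>="(-12)" and \<gamma>="(-3228)"]) simp_all
lemma sgi_15_1: "sg 15 \<inter> sg 1 = {}"
  by (subst Int_commute) (rule sgi_1_15)
lemma sgi_1_16: "sg 1 \<inter> sg 16 = {}"
  unfolding sg_1 sg_16 by (rule disj_sep[where \<alpha>="(-12)" and \<beta>="(-12)" and \<gamma>="(-3228)"]) simp_all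
lemma sgi_16_1: "sg 16 \<inter> sg 1 = {}"
  by (subst Int_commute) (rule sgi_1_16)
lemma sgi_1_17: "sg 1 \<inter> sg 17 = {}"
  unfolding sg_1 sg_17 by (rule disj_sep[where \<alpha>="(-12)" and \<beta>="(-12)" and \<gamma>="(-3360)"]) simp_all
lemma sgi_17_1: "sg 17 \<inter> sg 1 = {}"
  by (subst Int_commute) (rule sgi_1_17)
lemma sgi_1_18: "sg 1 \<inter> sg 18 = {}"
  unfolding sg_1 sg_18 by (rule disj_sep[where \<alpha>="(-12)" and \<beta>="(-12)" and \<gamma>="(-2844)"]) simp_all
lemma sgi_18_1: "sg 18 \<inter> sg 1 = {}"
  by (subst Int_commute) (rule sgi_1_18)
lemma sgi_1_19: "sg 1 \<inter> sg 19 = {}"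
  unfolding sg_1 sg_19 by (rule disj_sep[where \<alpha>="(-12)" and \<beta>="(-12)" and \<gamma>="(-3360)"]) simp_all
lemma sgi_19_1: "sg 19 \<inter> sg 1 = {}"
  by (subst Int_commute) (rule sgi_1_19)
lemma sgi_1_20: "sg 1 \<inter> sg 20 = {}"
  unfolding sg_1 sg_20 by (rule disj_sep[where \<alpha>="(-12)" and \<beta>="(-12)" and \<gamma>="(-3360)"]) simp_all
lemma sgi_20_1: "sg 20 \<inter> sg 1 = {}"
  by (subst Int_commute) (rule sgi_1_20)
lemma sgi_2_2: "sg 2 \<inter> sg 2 \<noteq> {}"
  unfolding sg_2 sg_2 by (rule meet[where u="0" and v="0"]) (simp_all add: algebra_simps)
lemma sgi_2_3: "sg 2 \<inter> sg 3 \<noteq> {}"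
  unfolding sg_2 sg_3 by (rule meet[where u="0" and v="0"]) (simp_all add: algebra_simps)
lemma sgi_3_2: "sg 3 \<inter> sg 2 \<noteq> {}"
  by (subst Int_commute) (rule sgi_2_3)
lemma sgi_2_4: "sg 2 \<inter> sg 4 \<noteq> {}"
  unfolding sg_2 sg_4 by (rule meet[where u="0" and v="0"]) (simp_all add: algebra_simps)
lemma sgi_4_2: "sg 4 \<inter> sg 2 \<noteq> {}"
  by (subst Int_commute) (rule sgi_2_4)
lemma sgi_2_5: "sg 2 \<inter> sg 5 \<noteq> {}"
  unfolding sg_2 sg_5 by (rule meet[where u="0" and v="0"]) (simp_all add: algebra_simps)
lemma sgi_5_2: "sg 5 \<inter> sg 2 \<noteq> {}"
  by (subst Int_commute) (rule sgi_2_5)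
lemma sgi_2_6: "sg 2 \<inter> sg 6 = {}"
  unfolding sg_2 sg_6 by (rule disj_sep[where \<alpha>="2" and \<beta>="1" and \<gamma>="480"]) simp_all
lemma sgi_6_2: "sg 6 \<inter> sg 2 = {}"
  by (subst Int_commute) (rule sgi_2_6)
lemma sgi_2_7: "sg 2 \<inter> sg 7 \<noteq> {}"
  unfolding sg_2 sg_7 by (rule meet[where u="1" and v="1"]) (simp_all add: algebra_simps)
lemma sgi_7_2: "sg 7 \<inter> sg 2 \<noteq> {}"
  by (subst Int_commute) (rule sgi_2_7)
lemma sgi_2_8: "sg 2 \<inter> sg 8 \<noteq> {}"
  unfolding sg_2 sg_8 by (rule meet[where u="6448/26843" and v="454/1579"]) (simp_all add: algebra_simps)
lemma sgi_8_2: "sg 8 \<inter> sg 2 \<noteq> {}"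
  by (subst Int_commute) (rule sgi_2_8)
lemma sgi_2_9: "sg 2 \<inter> sg 9 \<noteq> {}"
  unfolding sg_2 sg_9 by (rule meet[where u="4136/25075" and v="454/1475"]) (simp_all add: algebra_simps)
lemma sgi_9_2: "sg 9 \<inter> sg 2 \<noteq> {}"
  by (subst Int_commute) (rule sgi_2_9)
lemma sgi_2_10: "sg 2 \<inter> sg 10 \<noteq> {}"
  unfolding sg_2 sg_10 by (rule meet[where u="1839/5746" and v="227/338"]) (simp_all add: algebra_simps)
lemma sgi_10_2: "sg 10 \<inter> sg 2 \<noteq> {}"
  by (subst Int_commute) (rule sgi_2_10)
lemma sgi_2_11: "sg 2 \<inter> sg 11 \<noteq> {}"
  unfolding sg_2 sg_11 by (rule meet[where u="1" and v="1"]) (simp_all add: algebra_simps)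
lemma sgi_11_2: "sg 11 \<inter> sg 2 \<noteq> {}"
  by (subst Int_commute) (rule sgi_2_11)
lemma sgi_2_12: "sg 2 \<inter> sg 12 \<noteq> {}"
  unfolding sg_2 sg_12 by (rule meet[where u="9827/12682" and v="367/1492"]) (simp_all add: algebra_simps)
lemma sgi_12_2: "sg 12 \<inter> sg 2 \<noteq> {}"
  by (subst Int_commute) (rule sgi_2_12)
lemma sgi_2_13: "sg 2 \<inter> sg 13 \<noteq> {}"
  unfolding sg_2 sg_13 by (rule meet[where u="8225/11798" and v="367/1388"]) (simp_all add: algebra_simps)
lemma sgi_13_2: "sg 13 \<inter> sg 2 \<noteq> {}"
  by (subst Int_commute) (rule sgi_2_13)
lemma sgi_2_14: "sg 2 \<inter> sg 14 \<noteq> {}"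
  unfolding sg_2 sg_14 by (rule meet[where u="5823/10013" and v="367/589"]) (simp_all add: algebra_simps)
lemma sgi_14_2: "sg 14 \<inter> sg 2 \<noteq> {}"
  by (subst Int_commute) (rule sgi_2_14)
lemma sgi_2_15: "sg 2 \<inter> sg 15 \<noteq> {}"
  unfolding sg_2 sg_15 by (rule meet[where u="1" and v="0"]) (simp_all add: algebra_simps)
lemma sgi_15_2: "sg 15 \<inter> sg 2 \<noteq> {}"
  by (subst Int_commute) (rule sgi_2_15)
lemma sgi_2_16: "sg 2 \<inter> sg 16 \<noteq> {}"
  unfolding sg_2 sg_16 by (rule meet[where u="1" and v="0"]) (simp_all add: algebra_simps)
lemma sgi_16_2: "sg 16 \<inter> sg 2 \<noteq> {}"
  by (subst Int_commute) (rule sgi_2_16)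
lemma sgi_2_17: "sg 2 \<inter> sg 17 \<noteq> {}"
  unfolding sg_2 sg_17 by (rule meet[where u="1" and v="0"]) (simp_all add: algebra_simps)
lemma sgi_17_2: "sg 17 \<inter> sg 2 \<noteq> {}"
  by (subst Int_commute) (rule sgi_2_17)
lemma sgi_2_18: "sg 2 \<inter> sg 18 = {}"
  unfolding sg_2 sg_18 by (rule disj_sep[where \<alpha>="(-12)" and \<beta>="(-12)" and \<gamma>="(-2496)"]) simp_all
lemma sgi_18_2: "sg 18 \<inter> sg 2 = {}"
  by (subst Int_commute) (rule sgi_2_18)
lemma sgi_2_19: "sg 2 \<inter> sg 19 = {}"
  unfolding sg_2 sg_19 by (rule disj_sep[where \<alpha>="(-12)" and \<beta>="(-8)" and \<gamma>="(-2640)"]) simp_all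
lemma sgi_19_2: "sg 19 \<inter> sg 2 = {}"
  by (subst Int_commute) (rule sgi_2_19)
lemma sgi_2_20: "sg 2 \<inter> sg 20 = {}"
  unfolding sg_2 sg_20 by (rule disj_sep[where \<alpha>="(-12)" and \<beta>="(-8)" and \<gamma>="(-2640)"]) simp_all
lemma sgi_20_2: "sg 20 \<inter> sg 2 = {}"
  by (subst Int_commute) (rule sgi_2_20)
lemma sgi_3_3: "sg 3 \<inter> sg 3 \<noteq> {}"
  unfolding sg_3 sg_3 by (rule meet[where u="0" and v="0"]) (simp_all add: algebra_simps)
lemma sgi_3_4: "sg 3 \<inter> sg 4 \<noteq> {}"
  unfolding sg_3 sg_4 by (rule meet[where u="0" and v="0"]) (simp_all add: algebra_simps)
lemma sgi_4_3: "sg 4 \<inter> sg 3 \<noteq> {}"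
  by (subst Int_commute) (rule sgi_3_4)
lemma sgi_3_5: "sg 3 \<inter> sg 5 \<noteq> {}"
  unfolding sg_3 sg_5 by (rule meet[where u="0" and v="0"]) (simp_all add: algebra_simps)
lemma sgi_5_3: "sg 5 \<inter> sg 3 \<noteq> {}"
  by (subst Int_commute) (rule sgi_3_5)
lemma sgi_3_6: "sg 3 \<inter> sg 6 = {}"
  unfolding sg_3 sg_6 by (rule disj_sep[where \<alpha>="1" and \<beta>="(-1)" and \<gamma>="(-73/2)"]) simp_all
lemma sgi_6_3: "sg 6 \<inter> sg 3 = {}"
  by (subst Int_commute) (rule sgi_3_6)
lemma sgi_3_7: "sg 3 \<inter> sg 7 = {}"
  unfolding sg_3 sg_7 by (rule disj_sep[where \<alpha>="1" and \<beta>="(-1)" and \<gamma>="(-73/2)"]) simp_all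
lemma sgi_7_3: "sg 7 \<inter> sg 3 = {}"
  by (subst Int_commute) (rule sgi_3_7)
lemma sgi_3_8: "sg 3 \<inter> sg 8 \<noteq> {}"
  unfolding sg_3 sg_8 by (rule meet[where u="1" and v="1"]) (simp_all add: algebra_simps)
lemma sgi_8_3: "sg 8 \<inter> sg 3 \<noteq> {}"
  by (subst Int_commute) (rule sgi_3_8)
lemma sgi_3_9: "sg 3 \<inter> sg 9 \<noteq> {}"
  unfolding sg_3 sg_9 by (rule meet[where u="1034/2675" and v="1612/2675"]) (simp_all add: algebra_simps)
lemma sgi_9_3: "sg 9 \<inter> sg 3 \<noteq> {}"
  by (subst Int_commute) (rule sgi_3_9)
lemma sgi_3_10: "sg 3 \<inter> sg 10 = {}"
  unfolding sg_3 sg_10 by (rule disj_sep[where \<alpha>="1" and \<beta>="(-1)" and \<gamma>="(-73/2)"]) simp_all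
lemma sgi_10_3: "sg 10 \<inter> sg 3 = {}"
  by (subst Int_commute) (rule sgi_3_10)
lemma sgi_3_11: "sg 3 \<inter> sg 11 = {}"
  unfolding sg_3 sg_11 by (rule disj_sep[where \<alpha>="0" and \<beta>="(-12)" and \<gamma>="(-1068)"]) simp_all
lemma sgi_11_3: "sg 11 \<inter> sg 3 = {}"
  by (subst Int_commute) (rule sgi_3_11)
lemma sgi_3_12: "sg 3 \<inter> sg 12 \<noteq> {}"
  unfolding sg_3 sg_12 by (rule meet[where u="1" and v="1"]) (simp_all add: algebra_simps)
lemma sgi_12_3: "sg 12 \<inter> sg 3 \<noteq> {}"
  by (subst Int_commute) (rule sgi_3_12)
lemma sgi_3_13: "sg 3 \<inter> sg 13 \<noteq> {}"
  unfolding sg_3 sg_13 by (rule meet[where u="8225/11953" and v="9827/11953"]) (simp_all add: algebra_simps)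
lemma sgi_13_3: "sg 13 \<inter> sg 3 \<noteq> {}"
  by (subst Int_commute) (rule sgi_3_13)
lemma sgi_3_14: "sg 3 \<inter> sg 14 = {}"
  unfolding sg_3 sg_14 by (rule disj_sep[where \<alpha>="1" and \<beta>="(-2)" and \<gamma>="(-291/2)"]) simp_all
lemma sgi_14_3: "sg 14 \<inter> sg 3 = {}"
  by (subst Int_commute) (rule sgi_3_14)
lemma sgi_3_15: "sg 3 \<inter> sg 15 \<noteq> {}"
  unfolding sg_3 sg_15 by (rule meet[where u="1" and v="1"]) (simp_all add: algebra_simps)
lemma sgi_15_3: "sg 15 \<inter> sg 3 \<noteq> {}"
  by (subst Int_commute) (rule sgi_3_15)
lemma sgi_3_16: "sg 3 \<inter> sg 16 \<noteq> {}"
  unfolding sg_3 sg_16 by (rule meet[where u="17357/23377" and v="19125/23377"]) (simp_all add: algebra_simps)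
lemma sgi_16_3: "sg 16 \<inter> sg 3 \<noteq> {}"
  by (subst Int_commute) (rule sgi_3_16)
lemma sgi_3_17: "sg 3 \<inter> sg 17 = {}"
  unfolding sg_3 sg_17 by (rule disj_sep[where \<alpha>="1" and \<beta>="(-2)" and \<gamma>="(-291/2)"]) simp_all
lemma sgi_17_3: "sg 17 \<inter> sg 3 = {}"
  by (subst Int_commute) (rule sgi_3_17)
lemma sgi_3_18: "sg 3 \<inter> sg 18 \<noteq> {}"
  unfolding sg_3 sg_18 by (rule meet[where u="1" and v="0"]) (simp_all add: algebra_simps)
lemma sgi_18_3: "sg 18 \<inter> sg 3 \<noteq> {}"
  by (subst Int_commute) (rule sgi_3_18)
lemma sgi_3_19: "sg 3 \<inter> sg 19 \<noteq> {}"
  unfolding sg_3 sg_19 by (rule meet[where u="1" and v="0"]) (simp_all add: algebra_simps)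
lemma sgi_19_3: "sg 19 \<inter> sg 3 \<noteq> {}"
  by (subst Int_commute) (rule sgi_3_19)
lemma sgi_3_20: "sg 3 \<inter> sg 20 \<noteq> {}"
  unfolding sg_3 sg_20 by (rule meet[where u="6249/10213" and v="4252/10213"]) (simp_all add: algebra_simps)
lemma sgi_20_3: "sg 20 \<inter> sg 3 \<noteq> {}"
  by (subst Int_commute) (rule sgi_3_20)
lemma sgi_4_4: "sg 4 \<inter> sg 4 \<noteq> {}"
  unfolding sg_4 sg_4 by (rule meet[where u="0" and v="0"]) (simp_all add: algebra_simps)
lemma sgi_4_5: "sg 4 \<inter> sg 5 \<noteq> {}"
  unfolding sg_4 sg_5 by (rule meet[where u="0" and v="0"]) (simp_all add: algebra_simps)
lemma sgi_5_4: "sg 5 \<inter> sg 4 \<noteq> {}"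
  by (subst Int_commute) (rule sgi_4_5)
lemma sgi_4_6: "sg 4 \<inter> sg 6 = {}"
  unfolding sg_4 sg_6 by (rule disj_sep[where \<alpha>="1" and \<beta>="(-2)" and \<gamma>="(-461/2)"]) simp_all
lemma sgi_6_4: "sg 6 \<inter> sg 4 = {}"
  by (subst Int_commute) (rule sgi_4_6)
lemma sgi_4_7: "sg 4 \<inter> sg 7 = {}"
  unfolding sg_4 sg_7 by (rule disj_sep[where \<alpha>="1" and \<beta>="(-2)" and \<gamma>="(-461/2)"]) simp_all
lemma sgi_7_4: "sg 7 \<inter> sg 4 = {}"
  by (subst Int_commute) (rule sgi_4_7)
lemma sgi_4_8: "sg 4 \<inter> sg 8 = {}"
  unfolding sg_4 sg_8 by (rule disj_sep[where \<alpha>="1" and \<beta>="(-2)" and \<gamma>="(-461/2)"]) simp_all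
lemma sgi_8_4: "sg 8 \<inter> sg 4 = {}"
  by (subst Int_commute) (rule sgi_4_8)
lemma sgi_4_9: "sg 4 \<inter> sg 9 \<noteq> {}"
  unfolding sg_4 sg_9 by (rule meet[where u="1" and v="1"]) (simp_all add: algebra_simps)
lemma sgi_9_4: "sg 9 \<inter> sg 4 \<noteq> {}"
  by (subst Int_commute) (rule sgi_4_9)
lemma sgi_4_10: "sg 4 \<inter> sg 10 = {}"
  unfolding sg_4 sg_10 by (rule disj_sep[where \<alpha>="1" and \<beta>="(-2)" and \<gamma>="(-461/2)"]) simp_all
lemma sgi_10_4: "sg 10 \<inter> sg 4 = {}"
  by (subst Int_commute) (rule sgi_4_10)
lemma sgi_4_11: "sg 4 \<inter> sg 11 = {}"
  unfolding sg_4 sg_11 by (rule disj_sep[where \<alpha>="(-3)" and \<beta>="(-12)" and \<gamma>="(-1710)"]) simp_all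
lemma sgi_11_4: "sg 11 \<inter> sg 4 = {}"
  by (subst Int_commute) (rule sgi_4_11)
lemma sgi_4_12: "sg 4 \<inter> sg 12 = {}"
  unfolding sg_4 sg_12 by (rule disj_sep[where \<alpha>="(-3)" and \<beta>="(-12)" and \<gamma>="(-1710)"]) simp_all
lemma sgi_12_4: "sg 12 \<inter> sg 4 = {}"
  by (subst Int_commute) (rule sgi_4_12)
lemma sgi_4_13: "sg 4 \<inter> sg 13 \<noteq> {}"
  unfolding sg_4 sg_13 by (rule meet[where u="1" and v="1"]) (simp_all add: algebra_simps)
lemma sgi_13_4: "sg 13 \<inter> sg 4 \<noteq> {}"
  by (subst Int_commute) (rule sgi_4_13)
lemma sgi_4_14: "sg 4 \<inter> sg 14 = {}"
  unfolding sg_4 sg_14 by (rule disj_sep[where \<alpha>="0" and \<beta>="(-12)" and \<gamma>="(-1650)"]) simp_all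
lemma sgi_14_4: "sg 14 \<inter> sg 4 = {}"
  by (subst Int_commute) (rule sgi_4_14)
lemma sgi_4_15: "sg 4 \<inter> sg 15 = {}"
  unfolding sg_4 sg_15 by (rule disj_sep[where \<alpha>="(-6)" and \<beta>="(-12)" and \<gamma>="(-1821)"]) simp_all
lemma sgi_15_4: "sg 15 \<inter> sg 4 = {}"
  by (subst Int_commute) (rule sgi_4_15)
lemma sgi_4_16: "sg 4 \<inter> sg 16 \<noteq> {}"
  unfolding sg_4 sg_16 by (rule meet[where u="1" and v="1"]) (simp_all add: algebra_simps)
lemma sgi_16_4: "sg 16 \<inter> sg 4 \<noteq> {}"
  by (subst Int_commute) (rule sgi_4_16)
lemma sgi_4_17: "sg 4 \<inter> sg 17 = {}"
  unfolding sg_4 sg_17 by (rule disj_sep[where \<alpha>="0" and \<beta>="(-12)" and \<gamma>="(-1650)"]) simp_all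
lemma sgi_17_4: "sg 17 \<inter> sg 4 = {}"
  by (subst Int_commute) (rule sgi_4_17)
lemma sgi_4_18: "sg 4 \<inter> sg 18 \<noteq> {}"
  unfolding sg_4 sg_18 by (rule meet[where u="1" and v="1"]) (simp_all add: algebra_simps)
lemma sgi_18_4: "sg 18 \<inter> sg 4 \<noteq> {}"
  by (subst Int_commute) (rule sgi_4_18)
lemma sgi_4_19: "sg 4 \<inter> sg 19 = {}"
  unfolding sg_4 sg_19 by (rule disj_sep[where \<alpha>="0" and \<beta>="(-12)" and \<gamma>="(-1650)"]) simp_all
lemma sgi_19_4: "sg 19 \<inter> sg 4 = {}"
  by (subst Int_commute) (rule sgi_4_19)
lemma sgi_4_20: "sg 4 \<inter> sg 20 \<noteq> {}"
  unfolding sg_4 sg_20 by (rule meet[where u="1" and v="0"]) (simp_all add: algebra_simps)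
lemma sgi_20_4: "sg 20 \<inter> sg 4 \<noteq> {}"
  by (subst Int_commute) (rule sgi_4_20)
lemma sgi_5_5: "sg 5 \<inter> sg 5 \<noteq> {}"
  unfolding sg_5 sg_5 by (rule meet[where u="0" and v="0"]) (simp_all add: algebra_simps)
lemma sgi_5_6: "sg 5 \<inter> sg 6 = {}"
  unfolding sg_5 sg_6 by (rule disj_sep[where \<alpha>="1" and \<beta>="0" and \<gamma>="151"]) simp_all
lemma sgi_6_5: "sg 6 \<inter> sg 5 = {}"
  by (subst Int_commute) (rule sgi_5_6)
lemma sgi_5_7: "sg 5 \<inter> sg 7 = {}"
  unfolding sg_5 sg_7 by (rule disj_sep[where \<alpha>="1" and \<beta>="0" and \<gamma>="151"]) simp_all
lemma sgi_7_5: "sg 7 \<inter> sg 5 = {}"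
  by (subst Int_commute) (rule sgi_5_7)
lemma sgi_5_8: "sg 5 \<inter> sg 8 \<noteq> {}"
  unfolding sg_5 sg_8 by (rule meet[where u="6448/9639" and v="1226/3213"]) (simp_all add: algebra_simps)
lemma sgi_8_5: "sg 8 \<inter> sg 5 \<noteq> {}"
  by (subst Int_commute) (rule sgi_5_8)
lemma sgi_5_9: "sg 5 \<inter> sg 9 \<noteq> {}"
  unfolding sg_5 sg_9 by (rule meet[where u="4136/9927" and v="1226/3309"]) (simp_all add: algebra_simps)
lemma sgi_9_5: "sg 9 \<inter> sg 5 \<noteq> {}"
  by (subst Int_commute) (rule sgi_5_9)
lemma sgi_5_10: "sg 5 \<inter> sg 10 \<noteq> {}"
  unfolding sg_5 sg_10 by (rule meet[where u="1" and v="1"]) (simp_all add: algebra_simps)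
lemma sgi_10_5: "sg 10 \<inter> sg 5 \<noteq> {}"
  by (subst Int_commute) (rule sgi_5_10)
lemma sgi_5_11: "sg 5 \<inter> sg 11 = {}"
  unfolding sg_5 sg_11 by (rule disj_sep[where \<alpha>="(-7)" and \<beta>="(-12)" and \<gamma>="(-5005/2)"]) simp_all
lemma sgi_11_5: "sg 11 \<inter> sg 5 = {}"
  by (subst Int_commute) (rule sgi_5_11)
lemma sgi_5_12: "sg 5 \<inter> sg 12 = {}"
  unfolding sg_5 sg_12 by (rule disj_sep[where \<alpha>="(-7)" and \<beta>="(-12)" and \<gamma>="(-5005/2)"]) simp_all
lemma sgi_12_5: "sg 12 \<inter> sg 5 = {}"
  by (subst Int_commute) (rule sgi_5_12)
lemma sgi_5_13: "sg 5 \<inter> sg 13 = {}"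
  unfolding sg_5 sg_13 by (rule disj_sep[where \<alpha>="(-7)" and \<beta>="(-12)" and \<gamma>="(-5005/2)"]) simp_all
lemma sgi_13_5: "sg 13 \<inter> sg 5 = {}"
  by (subst Int_commute) (rule sgi_5_13)
lemma sgi_5_14: "sg 5 \<inter> sg 14 \<noteq> {}"
  unfolding sg_5 sg_14 by (rule meet[where u="1" and v="1"]) (simp_all add: algebra_simps)
lemma sgi_14_5: "sg 14 \<inter> sg 5 \<noteq> {}"
  by (subst Int_commute) (rule sgi_5_14)
lemma sgi_5_15: "sg 5 \<inter> sg 15 = {}"
  unfolding sg_5 sg_15 by (rule disj_sep[where \<alpha>="(-12)" and \<beta>="(-12)" and \<gamma>="(-3012)"]) simp_all
lemma sgi_15_5: "sg 15 \<inter> sg 5 = {}"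
  by (subst Int_commute) (rule sgi_5_15)
lemma sgi_5_16: "sg 5 \<inter> sg 16 = {}"
  unfolding sg_5 sg_16 by (rule disj_sep[where \<alpha>="(-12)" and \<beta>="(-12)" and \<gamma>="(-3012)"]) simp_all
lemma sgi_16_5: "sg 16 \<inter> sg 5 = {}"
  by (subst Int_commute) (rule sgi_5_16)
lemma sgi_5_17: "sg 5 \<inter> sg 17 \<noteq> {}"
  unfolding sg_5 sg_17 by (rule meet[where u="1" and v="1"]) (simp_all add: algebra_simps)
lemma sgi_17_5: "sg 17 \<inter> sg 5 \<noteq> {}"
  by (subst Int_commute) (rule sgi_5_17)
lemma sgi_5_18: "sg 5 \<inter> sg 18 = {}"
  unfolding sg_5 sg_18 by (rule disj_sep[where \<alpha>="(-12)" and \<beta>="(-12)" and \<gamma>="(-2628)"]) simp_all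
lemma sgi_18_5: "sg 18 \<inter> sg 5 = {}"
  by (subst Int_commute) (rule sgi_5_18)
lemma sgi_5_19: "sg 5 \<inter> sg 19 \<noteq> {}"
  unfolding sg_5 sg_19 by (rule meet[where u="1" and v="1"]) (simp_all add: algebra_simps)
lemma sgi_19_5: "sg 19 \<inter> sg 5 \<noteq> {}"
  by (subst Int_commute) (rule sgi_5_19)
lemma sgi_5_20: "sg 5 \<inter> sg 20 \<noteq> {}"
  unfolding sg_5 sg_20 by (rule meet[where u="1" and v="1"]) (simp_all add: algebra_simps)
lemma sgi_20_5: "sg 20 \<inter> sg 5 \<noteq> {}"
  by (subst Int_commute) (rule sgi_5_20)
lemma sgi_6_6: "sg 6 \<inter> sg 6 \<noteq> {}"
  unfolding sg_6 sg_6 by (rule meet[where u="0" and v="0"]) (simp_all add: algebra_simps)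
lemma sgi_6_7: "sg 6 \<inter> sg 7 \<noteq> {}"
  unfolding sg_6 sg_7 by (rule meet[where u="0" and v="0"]) (simp_all add: algebra_simps)
lemma sgi_7_6: "sg 7 \<inter> sg 6 \<noteq> {}"
  by (subst Int_commute) (rule sgi_6_7)
lemma sgi_6_8: "sg 6 \<inter> sg 8 \<noteq> {}"
  unfolding sg_6 sg_8 by (rule meet[where u="0" and v="0"]) (simp_all add: algebra_simps)
lemma sgi_8_6: "sg 8 \<inter> sg 6 \<noteq> {}"
  by (subst Int_commute) (rule sgi_6_8)
lemma sgi_6_9: "sg 6 \<inter> sg 9 \<noteq> {}"
  unfolding sg_6 sg_9 by (rule meet[where u="0" and v="0"]) (simp_all add: algebra_simps)
lemma sgi_9_6: "sg 9 \<inter> sg 6 \<noteq> {}"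
  by (subst Int_commute) (rule sgi_6_9)
lemma sgi_6_10: "sg 6 \<inter> sg 10 \<noteq> {}"
  unfolding sg_6 sg_10 by (rule meet[where u="0" and v="0"]) (simp_all add: algebra_simps)
lemma sgi_10_6: "sg 10 \<inter> sg 6 \<noteq> {}"
  by (subst Int_commute) (rule sgi_6_10)
lemma sgi_6_11: "sg 6 \<inter> sg 11 \<noteq> {}"
  unfolding sg_6 sg_11 by (rule meet[where u="1" and v="0"]) (simp_all add: algebra_simps)
lemma sgi_11_6: "sg 11 \<inter> sg 6 \<noteq> {}"
  by (subst Int_commute) (rule sgi_6_11)
lemma sgi_6_12: "sg 6 \<inter> sg 12 \<noteq> {}"
  unfolding sg_6 sg_12 by (rule meet[where u="1" and v="0"]) (simp_all add: algebra_simps)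
lemma sgi_12_6: "sg 12 \<inter> sg 6 \<noteq> {}"
  by (subst Int_commute) (rule sgi_6_12)
lemma sgi_6_13: "sg 6 \<inter> sg 13 \<noteq> {}"
  unfolding sg_6 sg_13 by (rule meet[where u="1" and v="0"]) (simp_all add: algebra_simps)
lemma sgi_13_6: "sg 13 \<inter> sg 6 \<noteq> {}"
  by (subst Int_commute) (rule sgi_6_13)
lemma sgi_6_14: "sg 6 \<inter> sg 14 \<noteq> {}"
  unfolding sg_6 sg_14 by (rule meet[where u="1" and v="0"]) (simp_all add: algebra_simps)
lemma sgi_14_6: "sg 14 \<inter> sg 6 \<noteq> {}"
  by (subst Int_commute) (rule sgi_6_14)
lemma sgi_6_15: "sg 6 \<inter> sg 15 = {}"
  unfolding sg_6 sg_15 by (rule disj_sep[where \<alpha>="(-12)" and \<beta>="(-12)" and \<gamma>="(-3228)"]) simp_all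
lemma sgi_15_6: "sg 15 \<inter> sg 6 = {}"
  by (subst Int_commute) (rule sgi_6_15)
lemma sgi_6_16: "sg 6 \<inter> sg 16 = {}"
  unfolding sg_6 sg_16 by (rule disj_sep[where \<alpha>="(-12)" and \<beta>="(-12)" and \<gamma>="(-3228)"]) simp_all
lemma sgi_16_6: "sg 16 \<inter> sg 6 = {}"
  by (subst Int_commute) (rule sgi_6_16)
lemma sgi_6_17: "sg 6 \<inter> sg 17 = {}"
  unfolding sg_6 sg_17 by (rule disj_sep[where \<alpha>="(-12)" and \<beta>="(-12)" and \<gamma>="(-3360)"]) simp_all
lemma sgi_17_6: "sg 17 \<inter> sg 6 = {}"
  by (subst Int_commute) (rule sgi_6_17)
lemma sgi_6_18: "sg 6 \<inter> sg 18 = {}"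
  unfolding sg_6 sg_18 by (rule disj_sep[where \<alpha>="(-12)" and \<beta>="(-12)" and \<gamma>="(-2844)"]) simp_all
lemma sgi_18_6: "sg 18 \<inter> sg 6 = {}"
  by (subst Int_commute) (rule sgi_6_18)
lemma sgi_6_19: "sg 6 \<inter> sg 19 = {}"
  unfolding sg_6 sg_19 by (rule disj_sep[where \<alpha>="(-12)" and \<beta>="(-12)" and \<gamma>="(-3360)"]) simp_all
lemma sgi_19_6: "sg 19 \<inter> sg 6 = {}"
  by (subst Int_commute) (rule sgi_6_19)
lemma sgi_6_20: "sg 6 \<inter> sg 20 = {}"
  unfolding sg_6 sg_20 by (rule disj_sep[where \<alpha>="(-12)" and \<beta>="(-12)" and \<gamma>="(-3360)"]) simp_all
lemma sgi_20_6: "sg 20 \<inter> sg 6 = {}"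
  by (subst Int_commute) (rule sgi_6_20)
lemma sgi_7_7: "sg 7 \<inter> sg 7 \<noteq> {}"
  unfolding sg_7 sg_7 by (rule meet[where u="0" and v="0"]) (simp_all add: algebra_simps)
lemma sgi_7_8: "sg 7 \<inter> sg 8 \<noteq> {}"
  unfolding sg_7 sg_8 by (rule meet[where u="0" and v="0"]) (simp_all add: algebra_simps)
lemma sgi_8_7: "sg 8 \<inter> sg 7 \<noteq> {}"
  by (subst Int_commute) (rule sgi_7_8)
lemma sgi_7_9: "sg 7 \<inter> sg 9 \<noteq> {}"
  unfolding sg_7 sg_9 by (rule meet[where u="0" and v="0"]) (simp_all add: algebra_simps)
lemma sgi_9_7: "sg 9 \<inter> sg 7 \<noteq> {}"
  by (subst Int_commute) (rule sgi_7_9)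
lemma sgi_7_10: "sg 7 \<inter> sg 10 \<noteq> {}"
  unfolding sg_7 sg_10 by (rule meet[where u="0" and v="0"]) (simp_all add: algebra_simps)
lemma sgi_10_7: "sg 10 \<inter> sg 7 \<noteq> {}"
  by (subst Int_commute) (rule sgi_7_10)
lemma sgi_7_11: "sg 7 \<inter> sg 11 \<noteq> {}"
  unfolding sg_7 sg_11 by (rule meet[where u="1" and v="1"]) (simp_all add: algebra_simps)
lemma sgi_11_7: "sg 11 \<inter> sg 7 \<noteq> {}"
  by (subst Int_commute) (rule sgi_7_11)
lemma sgi_7_12: "sg 7 \<inter> sg 12 \<noteq> {}"
  unfolding sg_7 sg_12 by (rule meet[where u="9517/12372" and v="4349/24744"]) (simp_all add: algebra_simps)
lemma sgi_12_7: "sg 12 \<inter> sg 7 \<noteq> {}"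
  by (subst Int_commute) (rule sgi_7_12)
lemma sgi_7_13: "sg 7 \<inter> sg 13 \<noteq> {}"
  unfolding sg_7 sg_13 by (rule meet[where u="9071/12644" and v="4349/25288"]) (simp_all add: algebra_simps)
lemma sgi_13_7: "sg 13 \<inter> sg 7 \<noteq> {}"
  by (subst Int_commute) (rule sgi_7_13)
lemma sgi_7_14: "sg 7 \<inter> sg 14 \<noteq> {}"
  unfolding sg_7 sg_14 by (rule meet[where u="7973/12163" and v="4349/12163"]) (simp_all add: algebra_simps)
lemma sgi_14_7: "sg 14 \<inter> sg 7 \<noteq> {}"
  by (subst Int_commute) (rule sgi_7_14)
lemma sgi_7_15: "sg 7 \<inter> sg 15 \<noteq> {}"
  unfolding sg_7 sg_15 by (rule meet[where u="1" and v="0"]) (simp_all add: algebra_simps)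
lemma sgi_15_7: "sg 15 \<inter> sg 7 \<noteq> {}"
  by (subst Int_commute) (rule sgi_7_15)
lemma sgi_7_16: "sg 7 \<inter> sg 16 \<noteq> {}"
  unfolding sg_7 sg_16 by (rule meet[where u="1" and v="0"]) (simp_all add: algebra_simps)
lemma sgi_16_7: "sg 16 \<inter> sg 7 \<noteq> {}"
  by (subst Int_commute) (rule sgi_7_16)
lemma sgi_7_17: "sg 7 \<inter> sg 17 \<noteq> {}"
  unfolding sg_7 sg_17 by (rule meet[where u="1" and v="0"]) (simp_all add: algebra_simps)
lemma sgi_17_7: "sg 17 \<inter> sg 7 \<noteq> {}"
  by (subst Int_commute) (rule sgi_7_17)
lemma sgi_7_18: "sg 7 \<inter> sg 18 = {}"
  unfolding sg_7 sg_18 by (rule disj_sep[where \<alpha>="(-12)" and \<beta>="(-12)" and \<gamma>="(-2496)"]) simp_all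
lemma sgi_18_7: "sg 18 \<inter> sg 7 = {}"
  by (subst Int_commute) (rule sgi_7_18)
lemma sgi_7_19: "sg 7 \<inter> sg 19 = {}"
  unfolding sg_7 sg_19 by (rule disj_sep[where \<alpha>="(-12)" and \<beta>="(-8)" and \<gamma>="(-2640)"]) simp_all
lemma sgi_19_7: "sg 19 \<inter> sg 7 = {}"
  by (subst Int_commute) (rule sgi_7_19)
lemma sgi_7_20: "sg 7 \<inter> sg 20 = {}"
  unfolding sg_7 sg_20 by (rule disj_sep[where \<alpha>="(-12)" and \<beta>="(-8)" and \<gamma>="(-2640)"]) simp_all
lemma sgi_20_7: "sg 20 \<inter> sg 7 = {}"
  by (subst Int_commute) (rule sgi_7_20)
lemma sgi_8_8: "sg 8 \<inter> sg 8 \<noteq> {}"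
  unfolding sg_8 sg_8 by (rule meet[where u="0" and v="0"]) (simp_all add: algebra_simps)
lemma sgi_8_9: "sg 8 \<inter> sg 9 \<noteq> {}"
  unfolding sg_8 sg_9 by (rule meet[where u="0" and v="0"]) (simp_all add: algebra_simps)
lemma sgi_9_8: "sg 9 \<inter> sg 8 \<noteq> {}"
  by (subst Int_commute) (rule sgi_8_9)
lemma sgi_8_10: "sg 8 \<inter> sg 10 \<noteq> {}"
  unfolding sg_8 sg_10 by (rule meet[where u="0" and v="0"]) (simp_all add: algebra_simps)
lemma sgi_10_8: "sg 10 \<inter> sg 8 \<noteq> {}"
  by (subst Int_commute) (rule sgi_8_10)
lemma sgi_8_11: "sg 8 \<inter> sg 11 = {}"
  unfolding sg_8 sg_11 by (rule disj_sep[where \<alpha>="0" and \<beta>="(-12)" and \<gamma>="(-1068)"]) simp_all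
lemma sgi_11_8: "sg 11 \<inter> sg 8 = {}"
  by (subst Int_commute) (rule sgi_8_11)
lemma sgi_8_12: "sg 8 \<inter> sg 12 \<noteq> {}"
  unfolding sg_8 sg_12 by (rule meet[where u="1" and v="1"]) (simp_all add: algebra_simps)
lemma sgi_12_8: "sg 12 \<inter> sg 8 \<noteq> {}"
  by (subst Int_commute) (rule sgi_8_12)
lemma sgi_8_13: "sg 8 \<inter> sg 13 \<noteq> {}"
  unfolding sg_8 sg_13 by (rule meet[where u="9071/12799" and v="9517/12799"]) (simp_all add: algebra_simps)
lemma sgi_13_8: "sg 13 \<inter> sg 8 \<noteq> {}"
  by (subst Int_commute) (rule sgi_8_13)
lemma sgi_8_14: "sg 8 \<inter> sg 14 = {}"
  unfolding sg_8 sg_14 by (rule disj_sep[where \<alpha>="1" and \<beta>="(-2)" and \<gamma>="(-291/2)"]) simp_all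
lemma sgi_14_8: "sg 14 \<inter> sg 8 = {}"
  by (subst Int_commute) (rule sgi_8_14)
lemma sgi_8_15: "sg 8 \<inter> sg 15 \<noteq> {}"
  unfolding sg_8 sg_15 by (rule meet[where u="1" and v="1"]) (simp_all add: algebra_simps)
lemma sgi_15_8: "sg 15 \<inter> sg 8 \<noteq> {}"
  by (subst Int_commute) (rule sgi_8_15)
lemma sgi_8_16: "sg 8 \<inter> sg 16 \<noteq> {}"
  unfolding sg_8 sg_16 by (rule meet[where u="20939/26959" and v="20395/26959"]) (simp_all add: algebra_simps)
lemma sgi_16_8: "sg 16 \<inter> sg 8 \<noteq> {}"
  by (subst Int_commute) (rule sgi_8_16)
lemma sgi_8_17: "sg 8 \<inter> sg 17 = {}"
  unfolding sg_8 sg_17 by (rule disj_sep[where \<alpha>="1" and \<beta>="(-2)" and \<gamma>="(-291/2)"]) simp_all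
lemma sgi_17_8: "sg 17 \<inter> sg 8 = {}"
  by (subst Int_commute) (rule sgi_8_17)
lemma sgi_8_18: "sg 8 \<inter> sg 18 \<noteq> {}"
  unfolding sg_8 sg_18 by (rule meet[where u="1" and v="0"]) (simp_all add: algebra_simps)
lemma sgi_18_8: "sg 18 \<inter> sg 8 \<noteq> {}"
  by (subst Int_commute) (rule sgi_8_18)
lemma sgi_8_19: "sg 8 \<inter> sg 19 \<noteq> {}"
  unfolding sg_8 sg_19 by (rule meet[where u="1" and v="0"]) (simp_all add: algebra_simps)
lemma sgi_19_8: "sg 19 \<inter> sg 8 \<noteq> {}"
  by (subst Int_commute) (rule sgi_8_19)
lemma sgi_8_20: "sg 8 \<inter> sg 20 \<noteq> {}"
  unfolding sg_8 sg_20 by (rule meet[where u="5791/9755" and v="6564/9755"]) (simp_all add: algebra_simps)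
lemma sgi_20_8: "sg 20 \<inter> sg 8 \<noteq> {}"
  by (subst Int_commute) (rule sgi_8_20)
lemma sgi_9_9: "sg 9 \<inter> sg 9 \<noteq> {}"
  unfolding sg_9 sg_9 by (rule meet[where u="0" and v="0"]) (simp_all add: algebra_simps)
lemma sgi_9_10: "sg 9 \<inter> sg 10 \<noteq> {}"
  unfolding sg_9 sg_10 by (rule meet[where u="0" and v="0"]) (simp_all add: algebra_simps)
lemma sgi_10_9: "sg 10 \<inter> sg 9 \<noteq> {}"
  by (subst Int_commute) (rule sgi_9_10)
lemma sgi_9_11: "sg 9 \<inter> sg 11 = {}"
  unfolding sg_9 sg_11 by (rule disj_sep[where \<alpha>="(-3)" and \<beta>="(-12)" and \<gamma>="(-1710)"]) simp_all
lemma sgi_11_9: "sg 11 \<inter> sg 9 = {}"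
  by (subst Int_commute) (rule sgi_9_11)
lemma sgi_9_12: "sg 9 \<inter> sg 12 = {}"
  unfolding sg_9 sg_12 by (rule disj_sep[where \<alpha>="(-3)" and \<beta>="(-12)" and \<gamma>="(-1710)"]) simp_all
lemma sgi_12_9: "sg 12 \<inter> sg 9 = {}"
  by (subst Int_commute) (rule sgi_9_12)
lemma sgi_9_13: "sg 9 \<inter> sg 13 \<noteq> {}"
  unfolding sg_9 sg_13 by (rule meet[where u="1" and v="1"]) (simp_all add: algebra_simps)
lemma sgi_13_9: "sg 13 \<inter> sg 9 \<noteq> {}"
  by (subst Int_commute) (rule sgi_9_13)
lemma sgi_9_14: "sg 9 \<inter> sg 14 = {}"
  unfolding sg_9 sg_14 by (rule disj_sep[where \<alpha>="0" and \<beta>="(-12)" and \<gamma>="(-1650)"]) simp_all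
lemma sgi_14_9: "sg 14 \<inter> sg 9 = {}"
  by (subst Int_commute) (rule sgi_9_14)
lemma sgi_9_15: "sg 9 \<inter> sg 15 = {}"
  unfolding sg_9 sg_15 by (rule disj_sep[where \<alpha>="(-6)" and \<beta>="(-12)" and \<gamma>="(-1821)"]) simp_all
lemma sgi_15_9: "sg 15 \<inter> sg 9 = {}"
  by (subst Int_commute) (rule sgi_9_15)
lemma sgi_9_16: "sg 9 \<inter> sg 16 \<noteq> {}"
  unfolding sg_9 sg_16 by (rule meet[where u="1" and v="1"]) (simp_all add: algebra_simps)
lemma sgi_16_9: "sg 16 \<inter> sg 9 \<noteq> {}"
  by (subst Int_commute) (rule sgi_9_16)
lemma sgi_9_17: "sg 9 \<inter> sg 17 = {}"
  unfolding sg_9 sg_17 by (rule disj_sep[where \<alpha>="0" and \<beta>="(-12)" and \<gamma>="(-1650)"]) simp_all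
lemma sgi_17_9: "sg 17 \<inter> sg 9 = {}"
  by (subst Int_commute) (rule sgi_9_17)
lemma sgi_9_18: "sg 9 \<inter> sg 18 \<noteq> {}"
  unfolding sg_9 sg_18 by (rule meet[where u="1" and v="1"]) (simp_all add: algebra_simps)
lemma sgi_18_9: "sg 18 \<inter> sg 9 \<noteq> {}"
  by (subst Int_commute) (rule sgi_9_18)
lemma sgi_9_19: "sg 9 \<inter> sg 19 = {}"
  unfolding sg_9 sg_19 by (rule disj_sep[where \<alpha>="0" and \<beta>="(-12)" and \<gamma>="(-1650)"]) simp_all
lemma sgi_19_9: "sg 19 \<inter> sg 9 = {}"
  by (subst Int_commute) (rule sgi_9_19)
lemma sgi_9_20: "sg 9 \<inter> sg 20 \<noteq> {}"
  unfolding sg_9 sg_20 by (rule meet[where u="1" and v="0"]) (simp_all add: algebra_simps)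
lemma sgi_20_9: "sg 20 \<inter> sg 9 \<noteq> {}"
  by (subst Int_commute) (rule sgi_9_20)
lemma sgi_10_10: "sg 10 \<inter> sg 10 \<noteq> {}"
  unfolding sg_10 sg_10 by (rule meet[where u="0" and v="0"]) (simp_all add: algebra_simps)
lemma sgi_10_11: "sg 10 \<inter> sg 11 = {}"
  unfolding sg_10 sg_11 by (rule disj_sep[where \<alpha>="(-7)" and \<beta>="(-12)" and \<gamma>="(-5005/2)"]) simp_all
lemma sgi_11_10: "sg 11 \<inter> sg 10 = {}"
  by (subst Int_commute) (rule sgi_10_11)
lemma sgi_10_12: "sg 10 \<inter> sg 12 = {}"
  unfolding sg_10 sg_12 by (rule disj_sep[where \<alpha>="(-7)" and \<beta>="(-12)" and \<gamma>="(-5005/2)"]) simp_all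
lemma sgi_12_10: "sg 12 \<inter> sg 10 = {}"
  by (subst Int_commute) (rule sgi_10_12)
lemma sgi_10_13: "sg 10 \<inter> sg 13 = {}"
  unfolding sg_10 sg_13 by (rule disj_sep[where \<alpha>="(-7)" and \<beta>="(-12)" and \<gamma>="(-5005/2)"]) simp_all
lemma sgi_13_10: "sg 13 \<inter> sg 10 = {}"
  by (subst Int_commute) (rule sgi_10_13)
lemma sgi_10_14: "sg 10 \<inter> sg 14 \<noteq> {}"
  unfolding sg_10 sg_14 by (rule meet[where u="1" and v="1"]) (simp_all add: algebra_simps)
lemma sgi_14_10: "sg 14 \<inter> sg 10 \<noteq> {}"
  by (subst Int_commute) (rule sgi_10_14)
lemma sgi_10_15: "sg 10 \<inter> sg 15 = {}"
  unfolding sg_10 sg_15 by (rule disj_sep[where \<alpha>="(-12)" and \<beta>="(-12)" and \<gamma>="(-3012)"]) simp_all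
lemma sgi_15_10: "sg 15 \<inter> sg 10 = {}"
  by (subst Int_commute) (rule sgi_10_15)
lemma sgi_10_16: "sg 10 \<inter> sg 16 = {}"
  unfolding sg_10 sg_16 by (rule disj_sep[where \<alpha>="(-12)" and \<beta>="(-12)" and \<gamma>="(-3012)"]) simp_all
lemma sgi_16_10: "sg 16 \<inter> sg 10 = {}"
  by (subst Int_commute) (rule sgi_10_16)
lemma sgi_10_17: "sg 10 \<inter> sg 17 \<noteq> {}"
  unfolding sg_10 sg_17 by (rule meet[where u="1" and v="1"]) (simp_all add: algebra_simps)
lemma sgi_17_10: "sg 17 \<inter> sg 10 \<noteq> {}"
  by (subst Int_commute) (rule sgi_10_17)
lemma sgi_10_18: "sg 10 \<inter> sg 18 = {}"
  unfolding sg_10 sg_18 by (rule disj_sep[where \<alpha>="(-12)" and \<beta>="(-12)" and \<gamma>="(-2628)"]) simp_all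
lemma sgi_18_10: "sg 18 \<inter> sg 10 = {}"
  by (subst Int_commute) (rule sgi_10_18)
lemma sgi_10_19: "sg 10 \<inter> sg 19 \<noteq> {}"
  unfolding sg_10 sg_19 by (rule meet[where u="1" and v="1"]) (simp_all add: algebra_simps)
lemma sgi_19_10: "sg 19 \<inter> sg 10 \<noteq> {}"
  by (subst Int_commute) (rule sgi_10_19)
lemma sgi_10_20: "sg 10 \<inter> sg 20 \<noteq> {}"
  unfolding sg_10 sg_20 by (rule meet[where u="1" and v="1"]) (simp_all add: algebra_simps)
lemma sgi_20_10: "sg 20 \<inter> sg 10 \<noteq> {}"
  by (subst Int_commute) (rule sgi_10_20)
lemma sgi_11_11: "sg 11 \<inter> sg 11 \<noteq> {}"
  unfolding sg_11 sg_11 by (rule meet[where u="0" and v="0"]) (simp_all add: algebra_simps)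
lemma sgi_11_12: "sg 11 \<inter> sg 12 \<noteq> {}"
  unfolding sg_11 sg_12 by (rule meet[where u="0" and v="0"]) (simp_all add: algebra_simps)
lemma sgi_12_11: "sg 12 \<inter> sg 11 \<noteq> {}"
  by (subst Int_commute) (rule sgi_11_12)
lemma sgi_11_13: "sg 11 \<inter> sg 13 \<noteq> {}"
  unfolding sg_11 sg_13 by (rule meet[where u="0" and v="0"]) (simp_all add: algebra_simps)
lemma sgi_13_11: "sg 13 \<inter> sg 11 \<noteq> {}"
  by (subst Int_commute) (rule sgi_11_13)
lemma sgi_11_14: "sg 11 \<inter> sg 14 \<noteq> {}"
  unfolding sg_11 sg_14 by (rule meet[where u="0" and v="0"]) (simp_all add: algebra_simps)
lemma sgi_14_11: "sg 14 \<inter> sg 11 \<noteq> {}"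
  by (subst Int_commute) (rule sgi_11_14)
lemma sgi_11_15: "sg 11 \<inter> sg 15 \<noteq> {}"
  unfolding sg_11 sg_15 by (rule meet[where u="1" and v="0"]) (simp_all add: algebra_simps)
lemma sgi_15_11: "sg 15 \<inter> sg 11 \<noteq> {}"
  by (subst Int_commute) (rule sgi_11_15)
lemma sgi_11_16: "sg 11 \<inter> sg 16 \<noteq> {}"
  unfolding sg_11 sg_16 by (rule meet[where u="1" and v="0"]) (simp_all add: algebra_simps)
lemma sgi_16_11: "sg 16 \<inter> sg 11 \<noteq> {}"
  by (subst Int_commute) (rule sgi_11_16)
lemma sgi_11_17: "sg 11 \<inter> sg 17 \<noteq> {}"
  unfolding sg_11 sg_17 by (rule meet[where u="1" and v="0"]) (simp_all add: algebra_simps)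
lemma sgi_17_11: "sg 17 \<inter> sg 11 \<noteq> {}"
  by (subst Int_commute) (rule sgi_11_17)
lemma sgi_11_18: "sg 11 \<inter> sg 18 = {}"
  unfolding sg_11 sg_18 by (rule disj_sep[where \<alpha>="(-12)" and \<beta>="(-12)" and \<gamma>="(-2496)"]) simp_all
lemma sgi_18_11: "sg 18 \<inter> sg 11 = {}"
  by (subst Int_commute) (rule sgi_11_18)
lemma sgi_11_19: "sg 11 \<inter> sg 19 = {}"
  unfolding sg_11 sg_19 by (rule disj_sep[where \<alpha>="(-12)" and \<beta>="(-8)" and \<gamma>="(-2640)"]) simp_all
lemma sgi_19_11: "sg 19 \<inter> sg 11 = {}"
  by (subst Int_commute) (rule sgi_11_19)
lemma sgi_11_20: "sg 11 \<inter> sg 20 = {}"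
  unfolding sg_11 sg_20 by (rule disj_sep[where \<alpha>="(-12)" and \<beta>="(-8)" and \<gamma>="(-2640)"]) simp_all
lemma sgi_20_11: "sg 20 \<inter> sg 11 = {}"
  by (subst Int_commute) (rule sgi_11_20)
lemma sgi_12_12: "sg 12 \<inter> sg 12 \<noteq> {}"
  unfolding sg_12 sg_12 by (rule meet[where u="0" and v="0"]) (simp_all add: algebra_simps)
lemma sgi_12_13: "sg 12 \<inter> sg 13 \<noteq> {}"
  unfolding sg_12 sg_13 by (rule meet[where u="0" and v="0"]) (simp_all add: algebra_simps)
lemma sgi_13_12: "sg 13 \<inter> sg 12 \<noteq> {}"
  by (subst Int_commute) (rule sgi_12_13)
lemma sgi_12_14: "sg 12 \<inter> sg 14 \<noteq> {}"
  unfolding sg_12 sg_14 by (rule meet[where u="0" and v="0"]) (simp_all add: algebra_simps)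
lemma sgi_14_12: "sg 14 \<inter> sg 12 \<noteq> {}"
  by (subst Int_commute) (rule sgi_12_14)
lemma sgi_12_15: "sg 12 \<inter> sg 15 \<noteq> {}"
  unfolding sg_12 sg_15 by (rule meet[where u="1" and v="1"]) (simp_all add: algebra_simps)
lemma sgi_15_12: "sg 15 \<inter> sg 12 \<noteq> {}"
  by (subst Int_commute) (rule sgi_12_15)
lemma sgi_12_16: "sg 12 \<inter> sg 16 \<noteq> {}"
  unfolding sg_12 sg_16 by (rule meet[where u="3573/6583" and v="2855/6583"]) (simp_all add: algebra_simps)
lemma sgi_16_12: "sg 16 \<inter> sg 12 \<noteq> {}"
  by (subst Int_commute) (rule sgi_12_16)
lemma sgi_12_17: "sg 12 \<inter> sg 17 \<noteq> {}"
  unfolding sg_12 sg_17 by (rule meet[where u="419/1358" and v="571/1358"]) (simp_all add: algebra_simps)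
lemma sgi_17_12: "sg 17 \<inter> sg 12 \<noteq> {}"
  by (subst Int_commute) (rule sgi_12_17)
lemma sgi_12_18: "sg 12 \<inter> sg 18 \<noteq> {}"
  unfolding sg_12 sg_18 by (rule meet[where u="1" and v="0"]) (simp_all add: algebra_simps)
lemma sgi_18_12: "sg 18 \<inter> sg 12 \<noteq> {}"
  by (subst Int_commute) (rule sgi_12_18)
lemma sgi_12_19: "sg 12 \<inter> sg 19 \<noteq> {}"
  unfolding sg_12 sg_19 by (rule meet[where u="1" and v="0"]) (simp_all add: algebra_simps)
lemma sgi_19_12: "sg 19 \<inter> sg 12 \<noteq> {}"
  by (subst Int_commute) (rule sgi_12_19)
lemma sgi_12_20: "sg 12 \<inter> sg 20 = {}"
  unfolding sg_12 sg_20 by (rule disj_sep[where \<alpha>="(-5)" and \<beta>="11" and \<gamma>="843"]) simp_all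
lemma sgi_20_12: "sg 20 \<inter> sg 12 = {}"
  by (subst Int_commute) (rule sgi_12_20)
lemma sgi_13_13: "sg 13 \<inter> sg 13 \<noteq> {}"
  unfolding sg_13 sg_13 by (rule meet[where u="0" and v="0"]) (simp_all add: algebra_simps)
lemma sgi_13_14: "sg 13 \<inter> sg 14 \<noteq> {}"
  unfolding sg_13 sg_14 by (rule meet[where u="0" and v="0"]) (simp_all add: algebra_simps)
lemma sgi_14_13: "sg 14 \<inter> sg 13 \<noteq> {}"
  by (subst Int_commute) (rule sgi_13_14)
lemma sgi_13_15: "sg 13 \<inter> sg 15 = {}"
  unfolding sg_13 sg_15 by (rule disj_sep[where \<alpha>="(-6)" and \<beta>="(-12)" and \<gamma>="(-1821)"]) simp_all
lemma sgi_15_13: "sg 15 \<inter> sg 13 = {}"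
  by (subst Int_commute) (rule sgi_13_15)
lemma sgi_13_16: "sg 13 \<inter> sg 16 \<noteq> {}"
  unfolding sg_13 sg_16 by (rule meet[where u="1" and v="1"]) (simp_all add: algebra_simps)
lemma sgi_16_13: "sg 16 \<inter> sg 13 \<noteq> {}"
  by (subst Int_commute) (rule sgi_13_16)
lemma sgi_13_17: "sg 13 \<inter> sg 17 \<noteq> {}"
  unfolding sg_13 sg_17 by (rule meet[where u="2095/5762" and v="3573/5762"]) (simp_all add: algebra_simps)
lemma sgi_17_13: "sg 17 \<inter> sg 13 \<noteq> {}"
  by (subst Int_commute) (rule sgi_13_17)
lemma sgi_13_18: "sg 13 \<inter> sg 18 \<noteq> {}"
  unfolding sg_13 sg_18 by (rule meet[where u="1" and v="1"]) (simp_all add: algebra_simps)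
lemma sgi_18_13: "sg 18 \<inter> sg 13 \<noteq> {}"
  by (subst Int_commute) (rule sgi_13_18)
lemma sgi_13_19: "sg 13 \<inter> sg 19 \<noteq> {}"
  unfolding sg_13 sg_19 by (rule meet[where u="3935/5917" and v="3728/5917"]) (simp_all add: algebra_simps)
lemma sgi_19_13: "sg 19 \<inter> sg 13 \<noteq> {}"
  by (subst Int_commute) (rule sgi_13_19)
lemma sgi_13_20: "sg 13 \<inter> sg 20 \<noteq> {}"
  unfolding sg_13 sg_20 by (rule meet[where u="1" and v="0"]) (simp_all add: algebra_simps)
lemma sgi_20_13: "sg 20 \<inter> sg 13 \<noteq> {}"
  by (subst Int_commute) (rule sgi_13_20)
lemma sgi_14_14: "sg 14 \<inter> sg 14 \<noteq> {}"
  unfolding sg_14 sg_14 by (rule meet[where u="0" and v="0"]) (simp_all add: algebra_simps)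
lemma sgi_14_15: "sg 14 \<inter> sg 15 = {}"
  unfolding sg_14 sg_15 by (rule disj_sep[where \<alpha>="(-12)" and \<beta>="(-12)" and \<gamma>="(-3012)"]) simp_all
lemma sgi_15_14: "sg 15 \<inter> sg 14 = {}"
  by (subst Int_commute) (rule sgi_14_15)
lemma sgi_14_16: "sg 14 \<inter> sg 16 = {}"
  unfolding sg_14 sg_16 by (rule disj_sep[where \<alpha>="(-12)" and \<beta>="(-12)" and \<gamma>="(-3012)"]) simp_all
lemma sgi_16_14: "sg 16 \<inter> sg 14 = {}"
  by (subst Int_commute) (rule sgi_14_16)
lemma sgi_14_17: "sg 14 \<inter> sg 17 \<noteq> {}"
  unfolding sg_14 sg_17 by (rule meet[where u="1" and v="1"]) (simp_all add: algebra_simps)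
lemma sgi_17_14: "sg 17 \<inter> sg 14 \<noteq> {}"
  by (subst Int_commute) (rule sgi_14_17)
lemma sgi_14_18: "sg 14 \<inter> sg 18 = {}"
  unfolding sg_14 sg_18 by (rule disj_sep[where \<alpha>="(-12)" and \<beta>="(-12)" and \<gamma>="(-2628)"]) simp_all
lemma sgi_18_14: "sg 18 \<inter> sg 14 = {}"
  by (subst Int_commute) (rule sgi_14_18)
lemma sgi_14_19: "sg 14 \<inter> sg 19 \<noteq> {}"
  unfolding sg_14 sg_19 by (rule meet[where u="1" and v="1"]) (simp_all add: algebra_simps)
lemma sgi_19_14: "sg 19 \<inter> sg 14 \<noteq> {}"
  by (subst Int_commute) (rule sgi_14_19)
lemma sgi_14_20: "sg 14 \<inter> sg 20 \<noteq> {}"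
  unfolding sg_14 sg_20 by (rule meet[where u="1" and v="1"]) (simp_all add: algebra_simps)
lemma sgi_20_14: "sg 20 \<inter> sg 14 \<noteq> {}"
  by (subst Int_commute) (rule sgi_14_20)
lemma sgi_15_15: "sg 15 \<inter> sg 15 \<noteq> {}"
  unfolding sg_15 sg_15 by (rule meet[where u="0" and v="0"]) (simp_all add: algebra_simps)
lemma sgi_15_16: "sg 15 \<inter> sg 16 \<noteq> {}"
  unfolding sg_15 sg_16 by (rule meet[where u="0" and v="0"]) (simp_all add: algebra_simps)
lemma sgi_16_15: "sg 16 \<inter> sg 15 \<noteq> {}"
  by (subst Int_commute) (rule sgi_15_16)
lemma sgi_15_17: "sg 15 \<inter> sg 17 \<noteq> {}"
  unfolding sg_15 sg_17 by (rule meet[where u="0" and v="0"]) (simp_all add: algebra_simps)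
lemma sgi_17_15: "sg 17 \<inter> sg 15 \<noteq> {}"
  by (subst Int_commute) (rule sgi_15_17)
lemma sgi_15_18: "sg 15 \<inter> sg 18 \<noteq> {}"
  unfolding sg_15 sg_18 by (rule meet[where u="1" and v="0"]) (simp_all add: algebra_simps)
lemma sgi_18_15: "sg 18 \<inter> sg 15 \<noteq> {}"
  by (subst Int_commute) (rule sgi_15_18)
lemma sgi_15_19: "sg 15 \<inter> sg 19 \<noteq> {}"
  unfolding sg_15 sg_19 by (rule meet[where u="1" and v="0"]) (simp_all add: algebra_simps)
lemma sgi_19_15: "sg 19 \<inter> sg 15 \<noteq> {}"
  by (subst Int_commute) (rule sgi_15_19)
lemma sgi_15_20: "sg 15 \<inter> sg 20 = {}"
  unfolding sg_15 sg_20 by (rule disj_sep[where \<alpha>="(-5)" and \<beta>="11" and \<gamma>="843"]) simp_all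
lemma sgi_20_15: "sg 20 \<inter> sg 15 = {}"
  by (subst Int_commute) (rule sgi_15_20)
lemma sgi_16_16: "sg 16 \<inter> sg 16 \<noteq> {}"
  unfolding sg_16 sg_16 by (rule meet[where u="0" and v="0"]) (simp_all add: algebra_simps)
lemma sgi_16_17: "sg 16 \<inter> sg 17 \<noteq> {}"
  unfolding sg_16 sg_17 by (rule meet[where u="0" and v="0"]) (simp_all add: algebra_simps)
lemma sgi_17_16: "sg 17 \<inter> sg 16 \<noteq> {}"
  by (subst Int_commute) (rule sgi_16_17)
lemma sgi_16_18: "sg 16 \<inter> sg 18 \<noteq> {}"
  unfolding sg_16 sg_18 by (rule meet[where u="1" and v="1"]) (simp_all add: algebra_simps)
lemma sgi_18_16: "sg 18 \<inter> sg 16 \<noteq> {}"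
  by (subst Int_commute) (rule sgi_16_18)
lemma sgi_16_19: "sg 16 \<inter> sg 19 \<noteq> {}"
  unfolding sg_16 sg_19 by (rule meet[where u="4695/6677" and v="3010/6677"]) (simp_all add: algebra_simps)
lemma sgi_19_16: "sg 19 \<inter> sg 16 \<noteq> {}"
  by (subst Int_commute) (rule sgi_16_19)
lemma sgi_16_20: "sg 16 \<inter> sg 20 \<noteq> {}"
  unfolding sg_16 sg_20 by (rule meet[where u="1" and v="0"]) (simp_all add: algebra_simps)
lemma sgi_20_16: "sg 20 \<inter> sg 16 \<noteq> {}"
  by (subst Int_commute) (rule sgi_16_20)
lemma sgi_17_17: "sg 17 \<inter> sg 17 \<noteq> {}"
  unfolding sg_17 sg_17 by (rule meet[where u="0" and v="0"]) (simp_all add: algebra_simps)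
lemma sgi_17_18: "sg 17 \<inter> sg 18 = {}"
  unfolding sg_17 sg_18 by (rule disj_sep[where \<alpha>="(-12)" and \<beta>="(-12)" and \<gamma>="(-2496)"]) simp_all
lemma sgi_18_17: "sg 18 \<inter> sg 17 = {}"
  by (subst Int_commute) (rule sgi_17_18)
lemma sgi_17_19: "sg 17 \<inter> sg 19 \<noteq> {}"
  unfolding sg_17 sg_19 by (rule meet[where u="1" and v="1"]) (simp_all add: algebra_simps)
lemma sgi_19_17: "sg 19 \<inter> sg 17 \<noteq> {}"
  by (subst Int_commute) (rule sgi_17_19)
lemma sgi_17_20: "sg 17 \<inter> sg 20 \<noteq> {}"
  unfolding sg_17 sg_20 by (rule meet[where u="1" and v="1"]) (simp_all add: algebra_simps)
lemma sgi_20_17: "sg 20 \<inter> sg 17 \<noteq> {}"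
  by (subst Int_commute) (rule sgi_17_20)
lemma sgi_18_18: "sg 18 \<inter> sg 18 \<noteq> {}"
  unfolding sg_18 sg_18 by (rule meet[where u="0" and v="0"]) (simp_all add: algebra_simps)
lemma sgi_18_19: "sg 18 \<inter> sg 19 \<noteq> {}"
  unfolding sg_18 sg_19 by (rule meet[where u="0" and v="0"]) (simp_all add: algebra_simps)
lemma sgi_19_18: "sg 19 \<inter> sg 18 \<noteq> {}"
  by (subst Int_commute) (rule sgi_18_19)
lemma sgi_18_20: "sg 18 \<inter> sg 20 \<noteq> {}"
  unfolding sg_18 sg_20 by (rule meet[where u="1" and v="0"]) (simp_all add: algebra_simps)
lemma sgi_20_18: "sg 20 \<inter> sg 18 \<noteq> {}"
  by (subst Int_commute) (rule sgi_18_20)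
lemma sgi_19_19: "sg 19 \<inter> sg 19 \<noteq> {}"
  unfolding sg_19 sg_19 by (rule meet[where u="0" and v="0"]) (simp_all add: algebra_simps)
lemma sgi_19_20: "sg 19 \<inter> sg 20 \<noteq> {}"
  unfolding sg_19 sg_20 by (rule meet[where u="1" and v="1"]) (simp_all add: algebra_simps)
lemma sgi_20_19: "sg 20 \<inter> sg 19 \<noteq> {}"
  by (subst Int_commute) (rule sgi_19_20)
lemma sgi_20_20: "sg 20 \<inter> sg 20 \<noteq> {}"
  unfolding sg_20 sg_20 by (rule meet[where u="0" and v="0"]) (simp_all add: algebra_simps)

lemmas sgi_all = sgi_0_0 sgi_0_1 sgi_1_0 sgi_0_2 sgi_2_0 sgi_0_3 sgi_3_0 sgi_0_4 sgi_4_0 sgi_0_5 sgi_5_0 sgi_0_6 sgi_6_0 sgi_0_7 sgi_7_0 sgi_0_8 sgi_8_0 sgi_0_9 sgi_9_0 sgi_0_10 sgi_10_0 sgi_0_11 sgi_11_0 sgi_0_12 sgi_12_0 sgi_0_13 sgi_13_0 sgi_0_14 sgi_14_0 sgi_0_15 sgi_15_0 sgi_0_16 sgi_16_0 sgi_0_17 sgi_17_0 sgi_0_18 sgi_18_0 sgi_0_19 sgi_19_0 sgi_0_20 sgi_20_0 sgi_1_1 sgi_1_2 sgi_2_1 sgi_1_3 sgi_3_1 sgi_1_4 sgi_4_1 sgi_1_5 sgi_5_1 sgi_1_6 sgi_6_1 sgi_1_7 sgi_7_1 sgi_1_8 sgi_8_1 sgi_1_9 sgi_9_1 sgi_1_10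 sgi_10_1 sgi_1_11 sgi_11_1 sgi_1_12 sgi_12_1 sgi_1_13 sgi_13_1 sgi_1_14 sgi_14_1 sgi_1_15 sgi_15_1 sgi_1_16 sgi_16_1 sgi_1_17 sgi_17_1 sgi_1_18 sgi_18_1 sgi_1_19 sgi_19_1 sgi_1_20 sgi_20_1 sgi_2_2 sgi_2_3 sgi_3_2 sgi_2_4 sgi_4_2 sgi_2_5 sgi_5_2 sgi_2_6 sgi_6_2 sgi_2_7 sgi_7_2 sgi_2_8 sgi_8_2 sgi_2_9 sgi_9_2 sgi_2_10 sgi_10_2 sgi_2_11 sgi_11_2 sgi_2_12 sgi_12_2 sgi_2_13 sgi_13_2 sgi_2_14 sgi_14_2 sgi_2_15 sgi_15_2 sgi_2_16 sgi_16_2 sgi_2_17 sgi_17_2 sgi_2_18 sgi_18_2 sgi_2_19 sgi_19_2 sgi_2_20 sgi_20_2 sgi_3_3 sgi_3_4 sgi_4_3 sgi_3_5 sgi_5_3 sgi_3_6 sgi_6_3 sgi_3_7 sgi_7_3 sgi_3_8 sgi_8_3 sgi_3_9 sgi_9_3 sgi_3_10 sgi_10_3 sgi_3_11 sgi_11_3 sgi_3_12 sgi_12_3 sgi_3_13 sgi_13_3 sgi_3_14 sgi_14_3 sgi_3_15 sgi_15_3 sgi_3_16 sgi_16_3 sgi_3_17 sgi_17_3 sgi_3_18 sgi_18_3 sgi_3_19 sgi_19_3 sgi_3_20 sgi_20_3 sgi_4_4 sgi_4_5 sgi_5_4 sgi_4_6 sgi_6_4 sgi_4_7 sgi_7_4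 sgi_4_8 sgi_8_4 sgi_4_9 sgi_9_4 sgi_4_10 sgi_10_4 sgi_4_11 sgi_11_4 sgi_4_12 sgi_12_4 sgi_4_13 sgi_13_4 sgi_4_14 sgi_14_4 sgi_4_15 sgi_15_4 sgi_4_16 sgi_16_4 sgi_4_17 sgi_17_4 sgi_4_18 sgi_18_4 sgi_4_19 sgi_19_4 sgi_4_20 sgi_20_4 sgi_5_5 sgi_5_6 sgi_6_5 sgi_5_7 sgi_7_5 sgi_5_8 sgi_8_5 sgi_5_9 sgi_9_5 sgi_5_10 sgi_10_5 sgi_5_11 sgi_11_5 sgi_5_12 sgi_12_5 sgi_5_13 sgi_13_5 sgi_5_14 sgi_14_5 sgi_5_15 sgi_15_5 sgi_5_16 sgi_16_5 sgi_5_17 sgi_17_5 sgi_5_18 sgi_18_5 sgi_5_19 sgi_19_5 sgi_5_20 sgi_20_5 sgi_6_6 sgi_6_7 sgi_7_6 sgi_6_8 sgi_8_6 sgi_6_9 sgi_9_6 sgi_6_10 sgi_10_6 sgi_6_11 sgi_11_6 sgi_6_12 sgi_12_6 sgi_6_13 sgi_13_6 sgi_6_14 sgi_14_6 sgi_6_15 sgi_15_6 sgi_6_16 sgi_16_6 sgi_6_17 sgi_17_6 sgi_6_18 sgi_18_6 sgi_6_19 sgi_19_6 sgi_6_20 sgi_20_6 sgi_7_7 sgi_7_8 sgi_8_7 sgi_7_9 sgi_9_7 sgi_7_10 sgi_10_7 sgi_7_11 sgi_11_7 sgi_7_12 sgi_12_7 sgi_7_13 sgi_13_7 sgi_7_14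 sgi_14_7 sgi_7_15 sgi_15_7 sgi_7_16 sgi_16_7 sgi_7_17 sgi_17_7 sgi_7_18 sgi_18_7 sgi_7_19 sgi_19_7 sgi_7_20 sgi_20_7 sgi_8_8 sgi_8_9 sgi_9_8 sgi_8_10 sgi_10_8 sgi_8_11 sgi_11_8 sgi_8_12 sgi_12_8 sgi_8_13 sgi_13_8 sgi_8_14 sgi_14_8 sgi_8_15 sgi_15_8 sgi_8_16 sgi_16_8 sgi_8_17 sgi_17_8 sgi_8_18 sgi_18_8 sgi_8_19 sgi_19_8 sgi_8_20 sgi_20_8 sgi_9_9 sgi_9_10 sgi_10_9 sgi_9_11 sgi_11_9 sgi_9_12 sgi_12_9 sgi_9_13 sgi_13_9 sgi_9_14 sgi_14_9 sgi_9_15 sgi_15_9 sgi_9_16 sgi_16_9 sgi_9_17 sgi_17_9 sgi_9_18 sgi_18_9 sgi_9_19 sgi_19_9 sgi_9_20 sgi_20_9 sgi_10_10 sgi_10_11 sgi_11_10 sgi_10_12 sgi_12_10 sgi_10_13 sgi_13_10 sgi_10_14 sgi_14_10 sgi_10_15 sgi_15_10 sgi_10_16 sgi_16_10 sgi_10_17 sgi_17_10 sgi_10_18 sgi_18_10 sgi_10_19 sgi_19_10 sgi_10_20 sgi_20_10 sgi_11_11 sgi_11_12 sgi_12_11 sgi_11_13 sgi_13_11 sgi_11_14 sgi_14_11 sgi_11_15 sgi_15_11 sgi_11_16 sgi_16_11 sgi_11_17 sgi_17_11 sgi_11_18 sgi_18_11 sgi_11_19 sgi_19_11 sgi_11_20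 sgi_20_11 sgi_12_12 sgi_12_13 sgi_13_12 sgi_12_14 sgi_14_12 sgi_12_15 sgi_15_12 sgi_12_16 sgi_16_12 sgi_12_17 sgi_17_12 sgi_12_18 sgi_18_12 sgi_12_19 sgi_19_12 sgi_12_20 sgi_20_12 sgi_13_13 sgi_13_14 sgi_14_13 sgi_13_15 sgi_15_13 sgi_13_16 sgi_16_13 sgi_13_17 sgi_17_13 sgi_13_18 sgi_18_13 sgi_13_19 sgi_19_13 sgi_13_20 sgi_20_13 sgi_14_14 sgi_14_15 sgi_15_14 sgi_14_16 sgi_16_14 sgi_14_17 sgi_17_14 sgi_14_18 sgi_18_14 sgi_14_19 sgi_19_14 sgi_14_20 sgi_20_14 sgi_15_15 sgi_15_16 sgi_16_15 sgi_15_17 sgi_17_15 sgi_15_18 sgi_18_15 sgi_15_19 sgi_19_15 sgi_15_20 sgi_20_15 sgi_16_16 sgi_16_17 sgi_17_16 sgi_16_18 sgi_18_16 sgi_16_19 sgi_19_16 sgi_16_20 sgi_20_16 sgi_17_17 sgi_17_18 sgi_18_17 sgi_17_19 sgi_19_17 sgi_17_20 sgi_20_17 sgi_18_18 sgi_18_19 sgi_19_18 sgi_18_20 sgi_20_18 sgi_19_19 sgi_19_20 sgi_20_19 sgi_20_20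

lemma lt21: "{..<21::nat} = {20,19,18,17,16,15,14,13,12,11,10,9,8,7,6,5,4,3,2,1,0}"
  by (simp add: lessThan_nat_numeral lessThan_Suc)

lemma sgE_all: "\<forall>i\<in>{..<21::nat}. \<forall>j\<in>{..<21::nat}. (sg i \<inter> sg j = {}) = A i j"
  unfolding lt21 by (simp only: ball_simps sgi_all A_tab simp_thms)

lemma sgE: "i < 21 \<Longrightarrow> j < 21 \<Longrightarrow> seg_adj (sg i) (sg j) = A i j"
  using sgE_all unfolding seg_adj_def by simp

lemma rows_distinct: "\<forall>i\<in>{..<21::nat}. \<forall>j\<in>{..<21::nat}. (\<forall>k\<in>{..<21::nat}. A i k = A j k) \<longrightarrow> i = j"
  unfolding lt21 by (simp only: ball_simps A_tab simp_thms)

lemma sg_inj: "inj_on sg {..<21}"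
proof (rule inj_onI)
  fix i j assume ij: "i \<in> {..<21::nat}" "j \<in> {..<21::nat}" "sg i = sg j"
  have "\<forall>k\<in>{..<21::nat}. A i k = A j k"
  proof
    fix k assume "k \<in> {..<21::nat}"
    then show "A i k = A j k" using sgE[of i k] sgE[of j k] ij by simp
  qed
  then show "i = j" using rows_distinct ij by blast
qed

lemma sg_image: "sg ` {..<21} = set sgl"
proof -
  have l: "length sgl = 21" by (simp add: sgl_def)
  show ?thesis unfolding sg_def set_conv_nth l by auto
qed

lemma V_eq:
  assumes "P = {(121,204), (175,196), (216,82), (189,51), (44,96), (36,140), (127,135)}"
  shows "seg_vertices P = sg ` {..<21}"
proof
  have all: "\<forall>a\<in>P. \<forall>b\<in>P. a \<noteq> b \<longrightarrow> closed_segment a b \<in> set sgl \<or> closed_segment b a \<in> set sgl"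
    unfolding assms sgl_def
    by (simp only: ball_simps list.set insert_iff empty_iff simp_thms prod.inject numeral_eq_iff eq_num_simps)
  show "seg_vertices P \<subseteq> sg ` {..<21}"
  proof
    fix x assume "x \<in> seg_vertices P"
    then obtain a b where ab: "x = closed_segment a b" "a \<in> P" "b \<in> P" "a \<noteq> b"
      unfolding seg_vertices_def by blast
    have "closed_segment a b \<in> set sgl" using all ab(2-4) closed_segment_commute by metis
    then show "x \<in> sg ` {..<21}" using ab(1) sg_image by simp
  qed
next
  have "\<forall>x\<in>set sgl. x \<in> seg_vertices P"
    unfolding sgl_def
    by (simp only: list.set ball_simps simp_thms) (intro conjI segv_intro; simp add: assms)
  then show "sg ` {..<21} \<subseteq> seg_vertices P" unfolding sg_image by blast
qed

lemma gp:
  assumes "P = {(121,204), (175,196), (216,82), (189,51), (44,96), (36,140), (127,135)}"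
  shows "general_position P"
  unfolding general_position_def assms by (simp add: ncoll)

definition MSK :: "nat list list" where "MSK = [[1, 3, 17], [1, 8, 17], [1, 12, 20], [1, 13, 15], [2, 3, 6], [2, 9, 19], [2, 10, 18], [2, 12, 20], [2, 14, 18], [3, 12, 10], [3, 13, 10], [5, 8, 11], [7, 8, 4], [7, 9, 19], [7, 13, 5], [7, 16, 5], [8, 12, 4], [8, 16, 14], [8, 20, 11], [9, 16, 14], [13, 17, 0], [13, 19, 0], [2, 4, 6, 19], [2, 15, 6, 20], [4, 13, 10, 15], [5, 17, 6, 18], [6, 8, 4, 17], [6, 13, 5, 15], [8, 15, 4, 14], [10, 19, 4, 11], [14, 20, 0, 15], [1, 5, 15, 16, 18], [3, 20, 6, 7, 11], [5, 14, 15, 16, 18], [5, 19, 6, 7, 11], [7, 14, 3, 4, 18], [9, 10, 11, 12, 15], [9, 20, 11, 12, 15], [10, 17, 3, 4, 18], [10, 20, 11, 12, 15], [12, 17, 0, 4, 9], [14, 19, 0, 4, 9], [16, 17, 0, 1, 6], [16, 20, 0, 1, 6], [17, 20, 0, 1, 6], [4, 5, 6, 7, 11, 12, 15], [4, 20, 6, 7, 11, 12, 15], [6, 10, 3, 4, 15, 16, 18], [6, 14, 3, 4, 15, 16, 18], [15, 17, 0, 1, 4, 6, 9], [15, 19, 0, 1, 4, 6, 9]]"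

definition mvalid :: "nat list \<Rightarrow> bool" where
  "mvalid m = (case m of x # y # N \<Rightarrow> x < 21 \<and> y < 21 \<and> x \<noteq> y \<and> \<not> A x y \<and>
      (\<exists>z\<in>set N. z < 21 \<and> A x z \<and> A z y) \<and> (\<forall>z\<in>{..<21}. A x z \<and> A z y \<longrightarrow> z \<in> set N) | _ \<Rightarrow> False)"

lemma MSK_valid: "\<forall>m\<in>set MSK. mvalid m"
  unfolding MSK_def mvalid_def lt21 by (simp add: A_tab A_tab1)

lemma MSK_hs: "\<not> hs 40 8 MSK"
  by code_simp

lemma ub:
  assumes V: "V = sg ` {..<21}" and mv: "mv_set V seg_adj U"
  shows "card U \<le> 12"
proof -
  define U' where "U' = {i\<in>{..<21}. sg i \<in> U}"
  have UV: "U \<subseteq> V" using mv by (simp add: mv_set_def)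
  have UU: "U = sg ` U'" using UV unfolding V U'_def by auto
  have U'sub: "U' \<subseteq> {..<21}" by (auto simp: U'_def)
  have cU: "card U = card U'" unfolding UU by (rule card_image) (rule inj_on_subset[OF sg_inj U'sub])
  define W where "W = {..<21} - U'"
  have hit: "\<forall>m\<in>set MSK. set m \<inter> W \<noteq> {}"
  proof
    fix m assume "m \<in> set MSK"
    then have "mvalid m" using MSK_valid by blast
    then obtain x y N where m: "m = x # y # N" and c: "x < 21" "y < 21" "x \<noteq> y" "\<not> A x y"
      "\<exists>z\<in>set N. z < 21 \<and> A x z \<and> A z y" "\<forall>z\<in>{..<21}. A x z \<and> A z y \<longrightarrow> z \<in> set N"
      unfolding mvalid_def by (auto split: list.splits)
    show "set m \<inter> W \<noteq> {}"
    proof (cases "x \<in> W \<or> y \<in> W")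
      case True then show ?thesis using m by auto
    next
      case False
      then have "x \<in> U'" "y \<in> U'" using c(1,2) unfolding W_def by auto
      then have xu: "sg x \<in> U" "sg y \<in> U" by (auto simp: U'_def)
      have ne: "sg x \<noteq> sg y" using c(1-3) inj_onD[OF sg_inj] by blast
      have mvxy: "mutually_visible V seg_adj U (sg x) (sg y)" using mv xu ne unfolding mv_set_def by blast
      obtain z where z: "z < 21" "A x z" "A z y" using c(5) by blast
      have "\<exists>w\<in>V. seg_adj (sg x) w \<and> seg_adj w (sg y) \<and> w \<notin> U"
      proof (rule mv_two_inv[OF mvxy])
        show "sg x \<in> V" "sg y \<in> V" "sg z \<in> V" using c(1,2) z(1) V by auto
        show "seg_adj (sg x) (sg z)" "seg_adj (sg z) (sg y)" using sgE c(1,2) z by auto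
        show "\<not> seg_adj (sg x) (sg y)" using sgE c(1,2,4) by auto
        show "sg x \<noteq> sg y" by (rule ne)
      qed
      then obtain w where w: "w \<in> V" "seg_adj (sg x) w" "seg_adj w (sg y)" "w \<notin> U" by blast
      then obtain z' where z': "z' < 21" "w = sg z'" using V by auto
      have "A x z'" "A z' y" using w z' sgE c(1,2) by auto
      then have "z' \<in> set N" using c(6) z'(1) by auto
      moreover have "z' \<in> W" using z' w(4) unfolding W_def U'_def by auto
      ultimately show ?thesis using m by auto
    qed
  qed
  have "\<not> card W \<le> 8"
  proof
    assume "card W \<le> 8"
    then have "hs 40 8 MSK" using hs_sound[of W MSK 8 40] hit by (simp add: W_def)
    then show False using MSK_hs by simp
  qed
  moreover have "card W = 21 - card U'" unfolding W_def using U'sub by (simp add: card_Diff_subset finite_subset)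
  moreover have "card U' \<le> 21" using card_mono[OF _ U'sub] by simp
  ultimately show ?thesis using cU by linarith
qed

definition S0 :: "nat set" where "S0 = {6,7,11,12,13,14,15,16,17,18,19,20}"

lemma S0_prop: "\<forall>i\<in>S0. \<forall>j\<in>S0. i \<noteq> j \<longrightarrow> A i j \<or> (\<exists>z\<in>{..<21}. A i z \<and> A z j \<and> z \<notin> S0)"
  unfolding S0_def lt21 by (simp only: ball_simps bex_simps insert_iff empty_iff A_tab simp_thms semiring_norm numeral_eq_iff eq_num_simps zero_neq_numeral numeral_eq_one_iff one_eq_numeral_iff zero_neq_one one_neq_zero)

lemma S0_sub: "S0 \<subseteq> {..<21}" by (auto simp: S0_def)

lemma lb:
  assumes V: "V = sg ` {..<21}"
  shows "mv_set V seg_adj (sg ` S0)"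
  unfolding mv_set_def
proof (intro conjI ballI impI)
  show "sg ` S0 \<subseteq> V" using S0_sub V by auto
next
  fix x y assume xy: "x \<in> sg ` S0" "y \<in> sg ` S0" "x \<noteq> y"
  then obtain i j where ij: "i \<in> S0" "j \<in> S0" "x = sg i" "y = sg j" by blast
  have i21: "i < 21" "j < 21" using ij S0_sub by auto
  have "i \<noteq> j" using xy ij by blast
  show "mutually_visible V seg_adj (sg ` S0) x y"
  proof (cases "A i j")
    case True
    then show ?thesis using mv_adj[of x V y seg_adj] xy ij i21 V sgE by auto
  next
    case False
    then obtain z where z: "z < 21" "A i z" "A z j" "z \<notin> S0" using S0_prop ij \<open>i \<noteq> j\<close> by auto
    have zi: "z \<noteq> i" "z \<noteq> j" using z(4) ij by auto
    have inj: "\<And>a b. a < 21 \<Longrightarrow> b < 21 \<Longrightarrow> sg a = sg b \<Longrightarrow> a = b" using inj_onD[OF sg_inj] by blast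
    show ?thesis
    proof (rule mv_two[where z="sg z"])
      show "x \<in> V" "y \<in> V" "sg z \<in> V" using ij i21 z(1) V by auto
      show "seg_adj x (sg z)" "seg_adj (sg z) y" using sgE ij i21 z by auto
      show "x \<noteq> y" by (rule xy(3))
      show "\<not> seg_adj x y" using False sgE ij i21 by auto
      show "x \<noteq> sg z" using inj[of i z] zi ij i21 z(1) by auto
      show "sg z \<noteq> y" using inj[of z j] zi ij i21 z(1) by auto
      show "sg z \<notin> sg ` S0"
      proof
        assume "sg z \<in> sg ` S0"
        then obtain k where "k \<in> S0" "sg z = sg k" by blast
        then show False using inj[of z k] z S0_sub by auto
      qed
    qed
  qed
qed

theorem proposition3:
  fixes P :: "(real \<times> real) set"
  assumes "P = {(121,204), (175,196), (216,82), (189,51), (44,96), (36,140), (127,135)}"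
  shows "general_position P \<and> mu (seg_vertices P) seg_adj = (7 choose 2) - 9
         \<and> mu (seg_vertices P) seg_adj = 12"
proof -
  have V: "seg_vertices P = sg ` {..<21}" using V_eq[OF assms] .
  have "inj_on sg S0" by (rule inj_on_subset[OF sg_inj S0_sub])
  then have "card (sg ` S0) = card S0" by (rule card_image)
  then have c12: "card (sg ` S0) = 12" by (simp add: S0_def)
  have sub: "{card U |U. mv_set (seg_vertices P) seg_adj U} \<subseteq> {..12}"
    using ub[OF V] by auto
  have mem: "12 \<in> {card U |U. mv_set (seg_vertices P) seg_adj U}"
    using lb[OF V] c12 by (metis (mono_tags, lifting) mem_Collect_eq)
  have m: "mu (seg_vertices P) seg_adj = 12"
    unfolding mu_def
    by (rule Max_eqI) (use sub mem finite_subset in auto)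
  have ch: "(7 choose 2) - 9 = (12::nat)" by (simp add: choose_two)
  show ?thesis using gp[OF assms] m ch by simp
qed

end
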